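(* Let $\ell\ge1$, $m\ge0$ and $\mu,\nu\in\Lambda^\ell_{st}(m)$. There exists a bijection $\varphi_\ell:\mathrm{ParMat}^\flat_{\nu,\mu}\to\mathrm{SST}^2_{\nu,\mu}$.
   Context: $\Lambda^\ell_{st}(m)$ is the set of $\ell$-tuples $\mu=(\mu^{(1)},\dots,\mu^{(\ell)})$ of possibly empty finite sequences of positive integers with total sum $m$; $\mathrm{Par}^\ell(m)$ the subset in which each $\mu^{(p)}$ is a partition (weakly decreasing). For $\mu,\nu\in\Lambda^\ell_{st}(m)$, $\mathrm{ParMat}^\flat_{\nu,\mu}$ is the set of pairs $(A,P)$ where $A=(a_{(p,i),(q,j)})$ is a matrix of nonnegative integers with rows indexed by $(p,i)$, $1\le p\le\ell$, $1\le i\le l(\nu^{(p)})$, and columns by $(q,j)$, $1\le q\le\ell$, $1\le j\le l(\mu^{(q)})$, such that $\sum_{q,j}a_{(p,i),(q,j)}=\nu^{(p)}_i$ and $\sum_{p,i}a_{(p,i),(q,j)}=\mu^{(q)}_j$, and $P=(\eta_{(p,i),(q,j)})$ where each $\eta_{(p,i),(q,j)}$ is a partition with all parts $\le a_{(p,i),(q,j)}$ and with at most $\min\{p,q\}-1$ parts. For $\lambda\in\mathrm{Par}^\ell(m)$ and $\mu\in\Lambda^\ell_{st}(m)$, a $\lambda$-tableau of type $\mu$ fills the Young diagrams of $\lambda^{(1)},\dots,\lambda^{(\ell)}$ with symbols $i_p=(i,p)$ ($p\in\{1,\dots,\ell\}$, $i\ge1$) so that $i_p$ occurs exactly $\mu^{(p)}_i$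 times; symbols are totally ordered by $(i_1,p_1)<(i_2,p_2)$ iff $p_1<p_2$, or $p_1=p_2$ and $i_1<i_2$. It is semistandard if, in each component, entries weakly increase along rows and strictly increase down columns, and every entry $i_p$ lying in the $j$-th component satisfies $p\ge j$. $\mathrm{SST}(\lambda,\mu)$ denotes the set of semistandard $\lambda$-tableaux of type $\mu$, and $\mathrm{SST}^2_{\nu,\mu}:=\bigcup_{\lambda\in\mathrm{Par}^\ell(m)}\mathrm{SST}(\lambda,\nu)\times\mathrm{SST}(\lambda,\mu)$. *)

theory Defs
  imports Main
begin

(* Conventions: an l-tuple of finite sequences is a list of length l of nat lists;
   component p (1-based) is  mu ! (p-1),  its i-th entry (1-based) is  mu ! (p-1) ! (i-1). *)

definition Lambda_st :: "nat \<Rightarrow> nat \<Rightarrow> nat list list set" where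
  "Lambda_st l m = {mu. length mu = l \<and> (\<forall>s\<in>set mu. \<forall>x\<in>set s. 0 < x)
                        \<and> (\<Sum>s\<leftarrow>mu. sum_list s) = m}"

definition is_partition :: "nat list \<Rightarrow> bool" where
  "is_partition s \<longleftrightarrow> sorted_wrt (\<ge>) s \<and> (\<forall>x\<in>set s. 0 < x)"

definition Par :: "nat \<Rightarrow> nat \<Rightarrow> nat list list set" where
  "Par l m = {la \<in> Lambda_st l m. \<forall>s\<in>set la. is_partition s}"

definition ent :: "nat list list \<Rightarrow> nat \<Rightarrow> nat \<Rightarrow> nat" where
  "ent mu p i = mu ! (p - 1) ! (i - 1)"

definition idx :: "nat list list \<Rightarrow> (nat \<times> nat) set" where
  "idx mu = {(p, i). 1 \<le> p \<and> p \<le> length mu \<and> 1 \<le> i \<and> i \<le> length (mu ! (p - 1))}"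

(* ParMat^flat_{nu,mu}: A is the matrix, P the matrix of partitions; both are
   functions on index pairs, taken to be trivial (0, resp. the empty partition)
   outside the index set, so that they are finite objects. *)
definition ParMat :: "nat list list \<Rightarrow> nat list list \<Rightarrow>
    (((nat \<times> nat) \<Rightarrow> (nat \<times> nat) \<Rightarrow> nat) \<times> ((nat \<times> nat) \<Rightarrow> (nat \<times> nat) \<Rightarrow> nat list)) set" where
  "ParMat nu mu = {(A, P).
     (\<forall>r c. (r, c) \<notin> idx nu \<times> idx mu \<longrightarrow> A r c = 0 \<and> P r c = []) \<and>
     (\<forall>(p, i)\<in>idx nu. (\<Sum>c\<in>idx mu. A (p, i) c) = ent nu p i) \<and>
     (\<forall>(q, j)\<in>idx mu. (\<Sum>r\<in>idx nu. A r (q, j)) = ent mu q j) \<and>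
     (\<forall>(p, i)\<in>idx nu. \<forall>(q, j)\<in>idx mu.
        is_partition (P (p, i) (q, j)) \<and>
        (\<forall>x\<in>set (P (p, i) (q, j)). x \<le> A (p, i) (q, j)) \<and>
        length (P (p, i) (q, j)) \<le> min p q - 1)}"

(* symbols i_p are pairs (i, p); total order on symbols *)
definition sym_less :: "nat \<times> nat \<Rightarrow> nat \<times> nat \<Rightarrow> bool" where
  "sym_less a b \<longleftrightarrow> snd a < snd b \<or> (snd a = snd b \<and> fst a < fst b)"

definition sym_le :: "nat \<times> nat \<Rightarrow> nat \<times> nat \<Rightarrow> bool" where
  "sym_le a b \<longleftrightarrow> sym_less a b \<or> a = b"

definition Cells :: "nat list list \<Rightarrow> (nat \<times> nat \<times> nat) set" where
  "Cells la = {(j, r, c). 1 \<le> j \<and> j \<le> length la \<and> 1 \<le> r \<and> r \<le> length (la ! (j - 1))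
                 \<and> 1 \<le> c \<and> c \<le> la ! (j - 1) ! (r - 1)}"

definition tableau :: "nat list list \<Rightarrow> nat list list \<Rightarrow> (nat \<times> nat \<times> nat \<Rightarrow> nat \<times> nat) \<Rightarrow> bool" where
  "tableau la mu T \<longleftrightarrow>
     (\<forall>x. x \<notin> Cells la \<longrightarrow> T x = (0, 0)) \<and>
     (\<forall>x\<in>Cells la. (snd (T x), fst (T x)) \<in> idx mu) \<and>
     (\<forall>(p, i)\<in>idx mu. card {x \<in> Cells la. T x = (i, p)} = ent mu p i)"

definition semistandard :: "nat list list \<Rightarrow> (nat \<times> nat \<times> nat \<Rightarrow> nat \<times> nat) \<Rightarrow> bool" where
  "semistandard la T \<longleftrightarrow>
     (\<forall>j r c. (j, r, c) \<in> Cells la \<and> (j, r, Suc c) \<in> Cells la \<longrightarrow> sym_le (T (j, r, c)) (T (j, r, Suc c))) \<and>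
     (\<forall>j r c. (j, r, c) \<in> Cells la \<and> (j, Suc r, c) \<in> Cells la \<longrightarrow> sym_less (T (j, r, c)) (T (j, Suc r, c))) \<and>
     (\<forall>j r c. (j, r, c) \<in> Cells la \<longrightarrow> j \<le> snd (T (j, r, c)))"

definition SST :: "nat list list \<Rightarrow> nat list list \<Rightarrow> (nat \<times> nat \<times> nat \<Rightarrow> nat \<times> nat) set" where
  "SST la mu = {T. tableau la mu T \<and> semistandard la T}"

definition SST2 :: "nat \<Rightarrow> nat \<Rightarrow> nat list list \<Rightarrow> nat list list \<Rightarrow>
    ((nat \<times> nat \<times> nat \<Rightarrow> nat \<times> nat) \<times> (nat \<times> nat \<times> nat \<Rightarrow> nat \<times> nat)) set" where
  "SST2 l m nu mu = (\<Union>la\<in>Par l m. SST la nu \<times> SST la mu)"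

end

theory Submission
  imports Defs "HOL-Library.Product_Lexorder" "HOL-Library.FuncSet"
begin


type_synonym st = "nat \<Rightarrow> nat \<Rightarrow> nat"

definition hs :: "(nat \<Rightarrow> nat) \<Rightarrow> (nat \<Rightarrow> nat) \<Rightarrow> bool" where
  "hs r l \<longleftrightarrow> (\<forall>i. r i \<le> l i \<and> l (Suc i) \<le> r i)"

definition CG :: "st \<Rightarrow> (nat \<times> nat \<times> nat) set" where
  "CG g = {(j, r, c). 1 \<le> r \<and> 1 \<le> c \<and> c \<le> g j (r - 1)}"

definition VV :: "st \<Rightarrow> bool" where
  "VV g \<longleftrightarrow> finite {(j, r). g j r \<noteq> 0}"

definition msz :: "st \<Rightarrow> nat" where
  "msz g = card (CG g)"

definition UpR :: "nat \<Rightarrow> nat \<Rightarrow> st \<Rightarrow> st \<Rightarrow> bool" where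
  "UpR p b x y \<longleftrightarrow> (\<forall>j. 1 \<le> j \<and> j \<le> p \<longrightarrow> hs (x j) (y j)) \<and>
     (\<forall>j. \<not> (1 \<le> j \<and> j \<le> p) \<longrightarrow> y j = x j) \<and> VV x \<and> VV y \<and> msz y = msz x + b"

lemma CG_eq_image:
  "CG g = (\<lambda>((j, r), c). (j, Suc r, c)) ` (SIGMA jr:{(j, r). g j r \<noteq> 0}. {1..g (fst jr) (snd jr)})"
  unfolding CG_def
  apply (auto simp: image_def)
  subgoal for j r c by (rule exI[where x="r - 1"]) auto
  done

lemma msz_sum:
  assumes "VV g" "finite D" "{(j, r). g j r \<noteq> 0} \<subseteq> D"
  shows "msz g = (\<Sum>(j, r)\<in>D. g j r)"
proof -
  let ?S = "{(j, r). g j r \<noteq> 0}"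
  have inj: "inj_on (\<lambda>((j, r), c). (j, Suc r, c)) (SIGMA jr:?S. {1..g (fst jr) (snd jr)})"
    by (auto simp: inj_on_def)
  have "msz g = card (SIGMA jr:?S. {1..g (fst jr) (snd jr)})"
    unfolding msz_def CG_eq_image using card_image[OF inj] by simp
  also have "\<dots> = (\<Sum>jr\<in>?S. g (fst jr) (snd jr))"
    using assms(1) unfolding VV_def by (subst card_SigmaI) auto
  also have "\<dots> = (\<Sum>jr\<in>D. g (fst jr) (snd jr))"
    using assms by (intro sum.mono_neutral_left) auto
  finally show ?thesis by (simp add: case_prod_beta')
qed

definition lf :: "(nat \<Rightarrow> nat) \<Rightarrow> (nat \<Rightarrow> nat) \<Rightarrow> (nat \<Rightarrow> nat) \<Rightarrow> (nat \<Rightarrow> nat)" where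
  "lf r t l = (\<lambda>i. min (r i) (t i) + max (r (Suc i)) (t (Suc i)) - l (Suc i))"

definition lk :: "(nat \<Rightarrow> nat) \<Rightarrow> (nat \<Rightarrow> nat) \<Rightarrow> (nat \<Rightarrow> nat) \<Rightarrow> nat" where
  "lk r t l = l 0 - max (r 0) (t 0)"

definition lb :: "(nat \<Rightarrow> nat) \<Rightarrow> (nat \<Rightarrow> nat) \<Rightarrow> (nat \<Rightarrow> nat) \<Rightarrow> nat \<Rightarrow> (nat \<Rightarrow> nat)" where
  "lb r t k kk = (\<lambda>i. case i of 0 \<Rightarrow> kk + max (r 0) (t 0)
      | Suc i' \<Rightarrow> min (r i') (t i') + max (r i) (t i) - k i')"

lemma lf_hs:
  assumes "hs r l" "hs t l"
  shows "hs (lf r t l) r" "hs (lf r t l) t"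
proof -
  have a: "r i \<le> l i" "l (Suc i) \<le> r i" "t i \<le> l i" "l (Suc i) \<le> t i" for i
    using assms unfolding hs_def by auto
  show "hs (lf r t l) r" unfolding hs_def lf_def
  proof (intro allI conjI)
    fix i
    show "min (r i) (t i) + max (r (Suc i)) (t (Suc i)) - l (Suc i) \<le> r i"
      using a[of i] a[of "Suc i"] by simp
    show "r (Suc i) \<le> min (r i) (t i) + max (r (Suc i)) (t (Suc i)) - l (Suc i)"
      using a[of i] a[of "Suc i"] by simp
  qed
  show "hs (lf r t l) t" unfolding hs_def lf_def
  proof (intro allI conjI)
    fix i
    show "min (r i) (t i) + max (r (Suc i)) (t (Suc i)) - l (Suc i) \<le> t i"
      using a[of i] a[of "Suc i"] by simp
    show "t (Suc i) \<le> min (r i) (t i) + max (r (Suc i)) (t (Suc i)) - l (Suc i)"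
      using a[of i] a[of "Suc i"] by simp
  qed
qed

lemma lb_hs:
  assumes "hs k r" "hs k t"
  shows "hs r (lb r t k kk)" "hs t (lb r t k kk)"
proof -
  have a: "k i \<le> r i" "r (Suc i) \<le> k i" "k i \<le> t i" "t (Suc i) \<le> k i" for i
    using assms unfolding hs_def by auto
  show "hs r (lb r t k kk)" unfolding hs_def lb_def
  proof (intro allI conjI)
    fix i
    show "r i \<le> (case i of 0 \<Rightarrow> kk + max (r 0) (t 0)
      | Suc i' \<Rightarrow> min (r i') (t i') + max (r i) (t i) - k i')"
      using a[of "i - 1"] by (cases i) auto
    show "(case Suc i of 0 \<Rightarrow> kk + max (r 0) (t 0)
      | Suc i' \<Rightarrow> min (r i') (t i') + max (r (Suc i)) (t (Suc i)) - k i') \<le> r i"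
      using a[of i] by simp
  qed
  show "hs t (lb r t k kk)" unfolding hs_def lb_def
  proof (intro allI conjI)
    fix i
    show "t i \<le> (case i of 0 \<Rightarrow> kk + max (r 0) (t 0)
      | Suc i' \<Rightarrow> min (r i') (t i') + max (r i) (t i) - k i')"
      using a[of "i - 1"] by (cases i) auto
    show "(case Suc i of 0 \<Rightarrow> kk + max (r 0) (t 0)
      | Suc i' \<Rightarrow> min (r i') (t i') + max (r (Suc i)) (t (Suc i)) - k i') \<le> t i"
      using a[of i] by simp
  qed
qed

lemma lb_lf:
  assumes "hs r l" "hs t l"
  shows "lb r t (lf r t l) (lk r t l) = l"
proof
  fix i
  have a: "r i \<le> l i" "l (Suc i) \<le> r i" "t i \<le> l i" "l (Suc i) \<le> t i" for i
    using assms unfolding hs_def by auto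
  show "lb r t (lf r t l) (lk r t l) i = l i"
    unfolding lb_def lf_def lk_def
    using a[of 0] a[of "i - 1"] a[of i] by (cases i) auto
qed

lemma lf_lb:
  assumes "hs k r" "hs k t"
  shows "lf r t (lb r t k kk) = k" "lk r t (lb r t k kk) = kk"
proof -
  have a: "k i \<le> r i" "r (Suc i) \<le> k i" "k i \<le> t i" "t (Suc i) \<le> k i" for i
    using assms unfolding hs_def by auto
  show "lf r t (lb r t k kk) = k"
  proof
    fix i show "lf r t (lb r t k kk) i = k i"
      unfolding lb_def lf_def using a[of i] by simp
  qed
  show "lk r t (lb r t k kk) = kk" unfolding lk_def lb_def by simp
qed

lemma lf_sum:
  assumes "hs r l" "hs t l" "\<forall>i\<ge>N. r i = 0 \<and> t i = 0"
  shows "(\<Sum>i<Suc N. l i) + (\<Sum>i<Suc N. lf r t l i) = (\<Sum>i<Suc N. r i) + (\<Sum>i<Suc N. t i) + lk r t l"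
proof -
  have a: "r i \<le> l i" "l (Suc i) \<le> r i" "t i \<le> l i" "l (Suc i) \<le> t i" for i
    using assms unfolding hs_def by auto
  have lfN: "lf r t l N = 0" unfolding lf_def using assms(3) a[of N] a[of "Suc N"] by auto
  have e: "l (Suc i) + lf r t l i = min (r i) (t i) + max (r (Suc i)) (t (Suc i))" for i
    unfolding lf_def using a[of i] a[of "Suc i"] by simp
  have "(\<Sum>i<Suc N. l i) = (\<Sum>i<N. l (Suc i)) + l 0"
    by (subst sum.lessThan_Suc_shift) simp
  moreover have "(\<Sum>i<Suc N. lf r t l i) = (\<Sum>i<N. lf r t l i)" using lfN by simp
  moreover have "(\<Sum>i<N. l (Suc i)) + (\<Sum>i<N. lf r t l i) =
      (\<Sum>i<N. min (r i) (t i)) + (\<Sum>i<N. max (r (Suc i)) (t (Suc i)))"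
    by (simp add: e sum.distrib[symmetric])
  moreover have "(\<Sum>i<N. max (r (Suc i)) (t (Suc i))) + max (r 0) (t 0) = (\<Sum>i<Suc N. max (r i) (t i))"
    by (subst sum.lessThan_Suc_shift) simp
  moreover have "(\<Sum>i<Suc N. max (r i) (t i)) = (\<Sum>i<N. max (r i) (t i))" using assms(3) by simp
  moreover have "(\<Sum>i<N. min (r i) (t i)) + (\<Sum>i<N. max (r i) (t i)) = (\<Sum>i<N. r i) + (\<Sum>i<N. t i)"
    by (simp add: sum.distrib[symmetric]) (rule sum.cong, auto)
  moreover have "(\<Sum>i<Suc N. r i) = (\<Sum>i<N. r i)" "(\<Sum>i<Suc N. t i) = (\<Sum>i<N. t i)" using assms(3) by simp_all
  moreover have "l 0 = lk r t l + max (r 0) (t 0)" unfolding lk_def using a[of 0] by simp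
  ultimately show ?thesis by linarith
qed


lemma fin_funs:
  assumes "finite D" "finite S"
  shows "finite {f :: 'a \<Rightarrow> 'b. (\<forall>x. x \<notin> D \<longrightarrow> f x = d x) \<and> (\<forall>x\<in>D. f x \<in> S)}"
proof -
  let ?F = "{f :: 'a \<Rightarrow> 'b. (\<forall>x. x \<notin> D \<longrightarrow> f x = d x) \<and> (\<forall>x\<in>D. f x \<in> S)}"
  have inj: "inj_on (\<lambda>f. restrict f D) ?F"
  proof (rule inj_onI)
    fix f g assume a: "f \<in> ?F" "g \<in> ?F" "restrict f D = restrict g D"
    show "f = g"
    proof
      fix x
      have e: "restrict f D x = restrict g D x" using a(3) by simp
      show "f x = g x"
      proof (cases "x \<in> D")
        case True then show ?thesis using e by simp
      next
        case False then show ?thesis using a(1,2) by simp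
      qed
    qed
  qed
  have sub: "(\<lambda>f. restrict f D) ` ?F \<subseteq> PiE D (\<lambda>_. S)"
    by (auto simp: PiE_iff)
  have "finite (PiE D (\<lambda>_. S))" using assms by (intro finite_PiE)
  then have "finite ((\<lambda>f. restrict f D) ` ?F)" using sub by (rule finite_subset[rotated])
  then show ?thesis using inj by (rule finite_imageD)
qed

lemma fin_funs2:
  assumes "finite D"
  shows "finite {f :: st. (\<forall>j i. (j, i) \<notin> D \<longrightarrow> f j i = d j i) \<and> (\<forall>j i. (j, i) \<in> D \<longrightarrow> f j i \<le> B)}"
proof -
  let ?G = "{g :: nat \<times> nat \<Rightarrow> nat. (\<forall>x. x \<notin> D \<longrightarrow> g x = case_prod d x) \<and> (\<forall>x\<in>D. g x \<in> {..B})}"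
  have "finite ?G" using assms by (intro fin_funs) auto
  then have "finite (curry ` ?G)" by simp
  moreover have "{f :: st. (\<forall>j i. (j, i) \<notin> D \<longrightarrow> f j i = d j i) \<and> (\<forall>j i. (j, i) \<in> D \<longrightarrow> f j i \<le> B)}
     \<subseteq> curry ` ?G"
  proof
    fix f assume f: "f \<in> {f :: st. (\<forall>j i. (j, i) \<notin> D \<longrightarrow> f j i = d j i) \<and> (\<forall>j i. (j, i) \<in> D \<longrightarrow> f j i \<le> B)}"
    show "f \<in> curry ` ?G"
    proof -
      have "\<forall>x. x \<notin> D \<longrightarrow> case_prod f x = case_prod d x" using f by clarsimp
      moreover have "\<forall>x\<in>D. case_prod f x \<in> {..B}" using f by clarsimp
      ultimately have "case_prod f \<in> ?G" by simp
      moreover have "f = curry (case_prod f)" by simp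
      ultimately show ?thesis by blast
    qed
  qed
  ultimately show ?thesis by (rule finite_subset[rotated])
qed

lemma VV_bound:
  assumes "VV g"
  shows "\<exists>J N. \<forall>j i. g j i \<noteq> 0 \<longrightarrow> j < J \<and> i < N"
proof -
  have f: "finite {(j, r). g j r \<noteq> 0}" using assms unfolding VV_def .
  have "finite (fst ` {(j, r). g j r \<noteq> 0})" "finite (snd ` {(j, r). g j r \<noteq> 0})" using f by auto
  then obtain J N where "\<forall>x\<in>fst ` {(j, r). g j r \<noteq> 0}. x < J" "\<forall>x\<in>snd ` {(j, r). g j r \<noteq> 0}. x < N"
    unfolding finite_nat_set_iff_bounded by blast
  note * = this
  show ?thesis
  proof (rule exI[of _ J], rule exI[of _ N], intro allI impI)
    fix j i assume "g j i \<noteq> 0"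
    then have "(j, i) \<in> {(j, r). g j r \<noteq> 0}" by simp
    then have "j \<in> fst ` {(j, r). g j r \<noteq> 0}" "i \<in> snd ` {(j, r). g j r \<noteq> 0}" by (force, force)
    then show "j < J \<and> i < N" using \<open>g j i \<noteq> 0\<close>
        \<open>\<forall>x\<in>fst ` {(j, r). g j r \<noteq> 0}. x < J\<close> \<open>\<forall>x\<in>snd ` {(j, r). g j r \<noteq> 0}. x < N\<close> by blast
  qed
qed
lemma VV_le:
  assumes "VV x" "\<And>j i. y j i \<le> x j i"
  shows "VV y"
proof -
  have "{(j, r). y j r \<noteq> 0} \<subseteq> {(j, r). x j r \<noteq> 0}"
  proof
    fix z assume "z \<in> {(j, r). y j r \<noteq> 0}"
    then obtain j r where z: "z = (j, r)" "y j r \<noteq> 0" by auto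
    then have "x j r \<noteq> 0" using assms(2)[of j r] by auto
    then show "z \<in> {(j, r). x j r \<noteq> 0}" using z by simp
  qed
  then show ?thesis using assms(1) unfolding VV_def by (rule finite_subset)
qed

lemma fin_le:
  assumes "VV x"
  shows "finite {y. \<forall>j i. y j i \<le> x j i}"
proof -
  let ?D = "{(j, r). x j r \<noteq> 0}"
  have fD: "finite ?D" using assms unfolding VV_def .
  then have "finite {f :: st. (\<forall>j i. (j, i) \<notin> ?D \<longrightarrow> f j i = (\<lambda>_ _. 0) j i) \<and> (\<forall>j i. (j, i) \<in> ?D \<longrightarrow> f j i \<le> Max (case_prod x ` ?D))}"
    by (rule fin_funs2)
  moreover have "{y. \<forall>j i. y j i \<le> x j i} \<subseteq> {f :: st. (\<forall>j i. (j, i) \<notin> ?D \<longrightarrow> f j i = (\<lambda>_ _. 0) j i) \<and> (\<forall>j i. (j, i) \<in> ?D \<longrightarrow> f j i \<le> Max (case_prod x ` ?D))}"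
  proof (rule subsetI)
    fix y assume "y \<in> {y. \<forall>j i. y j i \<le> x j i}"
    then have a: "\<forall>j i. y j i \<le> x j i" by simp
    have 1: "\<forall>j i. (j, i) \<notin> ?D \<longrightarrow> y j i = 0" using a by (metis (mono_tags) case_prodI le_zero_eq mem_Collect_eq)
    have 2: "\<forall>j i. (j, i) \<in> ?D \<longrightarrow> y j i \<le> Max (case_prod x ` ?D)"
    proof (intro allI impI)
      fix j i assume "(j, i) \<in> ?D"
      then have m: "x j i \<in> case_prod x ` ?D" by (intro image_eqI[of _ _ "(j, i)"]) auto
      have "finite (case_prod x ` ?D)" using fD by (rule finite_imageI)
      then have "x j i \<le> Max (case_prod x ` ?D)" using m by (rule Max_ge)
      then show "y j i \<le> Max (case_prod x ` ?D)" using a by (meson le_trans)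
    qed
    show "y \<in> {f :: st. (\<forall>j i. (j, i) \<notin> ?D \<longrightarrow> f j i = (\<lambda>_ _. 0) j i) \<and> (\<forall>j i. (j, i) \<in> ?D \<longrightarrow> f j i \<le> Max (case_prod x ` ?D))}"
      using 1 2 by simp
  qed
  ultimately show ?thesis by (rule finite_subset[rotated])
qed

lemma VV_hs:
  assumes "VV x" "\<forall>j. 1 \<le> j \<and> j \<le> p \<longrightarrow> hs (x j) (y j)" "\<forall>j. \<not> (1 \<le> j \<and> j \<le> p) \<longrightarrow> y j = x j"
  shows "VV y"
proof -
  have "{(j, r). y j r \<noteq> 0} \<subseteq> {(j, r). x j r \<noteq> 0} \<union> ({1..p} \<times> {0}) \<union> (\<lambda>(j, r). (j, Suc r)) ` {(j, r). x j r \<noteq> 0}"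
  proof (rule subsetI)
    fix z assume "z \<in> {(j, r). y j r \<noteq> 0}"
    then obtain j r where z: "z = (j, r)" "y j r \<noteq> 0" by auto
    show "z \<in> {(j, r). x j r \<noteq> 0} \<union> ({1..p} \<times> {0}) \<union> (\<lambda>(j, r). (j, Suc r)) ` {(j, r). x j r \<noteq> 0}"
    proof (rule ccontr)
    assume "z \<notin> {(j, r). x j r \<noteq> 0} \<union> ({1..p} \<times> {0}) \<union> (\<lambda>(j, r). (j, Suc r)) ` {(j, r). x j r \<noteq> 0}"
    then have a: "y j r \<noteq> 0" "(j, r) \<notin> (\<lambda>(j, r). (j, Suc r)) ` {(j, r). x j r \<noteq> 0}" "x j r = 0" "(j, r) \<notin> {1..p} \<times> {0}"
      using z by auto
    have jp: "1 \<le> j \<and> j \<le> p" using a assms(3) by auto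
    have "r = 0"
    proof (rule ccontr)
      assume "r \<noteq> 0"
      then obtain r' where r: "r = Suc r'" using not0_implies_Suc by blast
      have "y j (Suc r') \<le> x j r'" using assms(2) jp unfolding hs_def by auto
      moreover have "x j r' = 0"
      proof (rule ccontr)
        assume "x j r' \<noteq> 0"
        then have "(j, r) \<in> (\<lambda>(j, r). (j, Suc r)) ` {(j, r). x j r \<noteq> 0}" using r by auto
        then show False using a(2) by simp
      qed
      ultimately show False using a(1) r by simp
    qed
    then show False using a(4) jp by simp
    qed
  qed
  moreover have "finite ({(j, r). x j r \<noteq> 0} \<union> ({1..p} \<times> {0}) \<union> (\<lambda>(j, r). (j, Suc r)) ` {(j, r). x j r \<noteq> 0})"
    using assms(1) unfolding VV_def by auto
  ultimately show ?thesis unfolding VV_def by (rule finite_subset)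
qed

lemma msz_boxsum:
  assumes "VV g" "\<forall>j i. g j i \<noteq> 0 \<longrightarrow> j < J \<and> i < N"
  shows "msz g = (\<Sum>j<J. \<Sum>i<N. g j i)"
proof -
  have "msz g = (\<Sum>(j, r)\<in>{..<J} \<times> {..<N}. g j r)"
    using assms by (intro msz_sum) auto
  also have "\<dots> = (\<Sum>j<J. \<Sum>i<N. g j i)" by (simp add: sum.cartesian_product)
  finally show ?thesis .
qed

lemma CG_mono:
  assumes "\<And>j i. y j i \<le> x j i"
  shows "CG y \<subseteq> CG x"
  using assms unfolding CG_def by (auto intro: le_trans)

lemma finite_CG: "VV g \<Longrightarrow> finite (CG g)"
  unfolding CG_eq_image VV_def by auto

lemma msz_mono:
  assumes "VV x" "\<And>j i. y j i \<le> x j i"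
  shows "msz y \<le> msz x"
  unfolding msz_def using finite_CG[OF assms(1)] CG_mono[OF assms(2)] by (rule card_mono)


definition mf :: "nat \<Rightarrow> nat \<Rightarrow> st \<Rightarrow> st \<Rightarrow> st \<Rightarrow> st" where
  "mf p q x t l = (\<lambda>j. if 1 \<le> j \<and> j \<le> min p q then lf (x j) (t j) (l j) else if j \<le> q then t j else x j)"

definition mk :: "nat \<Rightarrow> nat \<Rightarrow> st \<Rightarrow> st \<Rightarrow> st \<Rightarrow> nat \<Rightarrow> nat" where
  "mk p q x t l = (\<lambda>j. if 1 \<le> j \<and> j \<le> min p q then lk (x j) (t j) (l j) else 0)"

definition mb :: "nat \<Rightarrow> nat \<Rightarrow> st \<Rightarrow> st \<Rightarrow> st \<Rightarrow> (nat \<Rightarrow> nat) \<Rightarrow> st" where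
  "mb p q x t y kv = (\<lambda>j. if 1 \<le> j \<and> j \<le> min p q then lb (x j) (t j) (y j) (kv j) else if j \<le> p then t j else x j)"

definition Lset :: "nat \<Rightarrow> nat \<Rightarrow> nat \<Rightarrow> nat \<Rightarrow> st \<Rightarrow> st \<Rightarrow> st set" where
  "Lset p q b a x t = {l. UpR p b x l \<and> UpR q a t l}"

definition Kset :: "nat \<Rightarrow> nat \<Rightarrow> nat \<Rightarrow> nat \<Rightarrow> st \<Rightarrow> st \<Rightarrow> nat \<Rightarrow> st set" where
  "Kset p q b a x t k = {y. UpR q (a - k) y x \<and> UpR p (b - k) y t}"

definition KVset :: "nat \<Rightarrow> nat \<Rightarrow> (nat \<Rightarrow> nat) set" where
  "KVset r k = {kv. (\<forall>j. \<not> (1 \<le> j \<and> j \<le> r) \<longrightarrow> kv j = 0) \<and> (\<Sum>j\<in>{1..r}. kv j) = k}"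

lemma sum_if_range:
  fixes r J :: nat
  assumes "r < J"
  shows "(\<Sum>j<J. if 1 \<le> j \<and> j \<le> r then f j else (0::nat)) = (\<Sum>j\<in>{1..r}. f j)"
proof -
  have "(\<Sum>j<J. if 1 \<le> j \<and> j \<le> r then f j else (0::nat)) = (\<Sum>j\<in>{j \<in> {..<J}. 1 \<le> j \<and> j \<le> r}. f j)"
    by (rule sum.inter_filter[symmetric]) (rule finite_lessThan)
  also have "{j \<in> {..<J}. 1 \<le> j \<and> j \<le> r} = {1..r}" using assms by auto
  finally show ?thesis .
qed

lemma msz_ident:
  assumes V: "VV x" "VV t" "VV l" "VV y"
    and A: "\<forall>j. 1 \<le> j \<and> j \<le> r \<longrightarrow> hs (x j) (l j) \<and> hs (t j) (l j) \<and> y j = lf (x j) (t j) (l j) \<and> kv j = lk (x j) (t j) (l j)"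
    and B: "\<forall>j. \<not> (1 \<le> j \<and> j \<le> r) \<longrightarrow> (\<forall>i. l j i + y j i = x j i + t j i)"
  shows "msz l + msz y = msz x + msz t + (\<Sum>j\<in>{1..r}. kv j)"
proof -
  obtain J1 N1 where b1: "\<forall>j i. x j i \<noteq> 0 \<longrightarrow> j < J1 \<and> i < N1" using VV_bound[OF V(1)] by blast
  obtain J2 N2 where b2: "\<forall>j i. t j i \<noteq> 0 \<longrightarrow> j < J2 \<and> i < N2" using VV_bound[OF V(2)] by blast
  obtain J3 N3 where b3: "\<forall>j i. l j i \<noteq> 0 \<longrightarrow> j < J3 \<and> i < N3" using VV_bound[OF V(3)] by blast
  obtain J4 N4 where b4: "\<forall>j i. y j i \<noteq> 0 \<longrightarrow> j < J4 \<and> i < N4" using VV_bound[OF V(4)] by blast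
  define J where "J = Suc (r + J1 + J2 + J3 + J4)"
  define N where "N = N1 + N2 + N3 + N4"
  have bx: "\<forall>j i. x j i \<noteq> 0 \<longrightarrow> j < J \<and> i < N" using b1 unfolding J_def N_def by fastforce
  have bt: "\<forall>j i. t j i \<noteq> 0 \<longrightarrow> j < J \<and> i < N" using b2 unfolding J_def N_def by fastforce
  have bl: "\<forall>j i. l j i \<noteq> 0 \<longrightarrow> j < J \<and> i < N" using b3 unfolding J_def N_def by fastforce
  have by': "\<forall>j i. y j i \<noteq> 0 \<longrightarrow> j < J \<and> i < N" using b4 unfolding J_def N_def by fastforce
  have rJ: "r < J" unfolding J_def by simp
  have row: "(\<Sum>i<N. l j i) + (\<Sum>i<N. y j i) = (\<Sum>i<N. x j i) + (\<Sum>i<N. t j i) + (if 1 \<le> j \<and> j \<le> r then kv j else 0)" for j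
  proof (cases "1 \<le> j \<and> j \<le> r")
    case True
    then have h: "hs (x j) (l j)" "hs (t j) (l j)" "y j = lf (x j) (t j) (l j)" "kv j = lk (x j) (t j) (l j)"
      using A by auto
    have z: "\<forall>i\<ge>N. x j i = 0 \<and> t j i = 0" using bx bt by (meson leD)
    have "(\<Sum>i<Suc N. l j i) + (\<Sum>i<Suc N. lf (x j) (t j) (l j) i) = (\<Sum>i<Suc N. x j i) + (\<Sum>i<Suc N. t j i) + lk (x j) (t j) (l j)"
      by (rule lf_sum[OF h(1,2) z])
    moreover have "l j N = 0" "y j N = 0" "x j N = 0" "t j N = 0" using bx bt bl by' by blast+
    ultimately show ?thesis using h True by simp
  next
    case False
    then have "\<forall>i. l j i + y j i = x j i + t j i" using B by auto
    then have "(\<Sum>i<N. l j i + y j i) = (\<Sum>i<N. x j i + t j i)" by simp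
    moreover have "(if 1 \<le> j \<and> j \<le> r then kv j else 0) = 0" using False by auto
    ultimately show ?thesis by (simp add: sum.distrib)
  qed
  have "msz l + msz y = (\<Sum>j<J. \<Sum>i<N. l j i) + (\<Sum>j<J. \<Sum>i<N. y j i)"
    using msz_boxsum[OF V(3) bl] msz_boxsum[OF V(4) by'] by simp
  also have "\<dots> = (\<Sum>j<J. (\<Sum>i<N. l j i) + (\<Sum>i<N. y j i))" by (simp add: sum.distrib)
  also have "\<dots> = (\<Sum>j<J. (\<Sum>i<N. x j i) + (\<Sum>i<N. t j i) + (if 1 \<le> j \<and> j \<le> r then kv j else 0))"
    using row by simp
  also have "\<dots> = (\<Sum>j<J. \<Sum>i<N. x j i) + (\<Sum>j<J. \<Sum>i<N. t j i) + (\<Sum>j<J. if 1 \<le> j \<and> j \<le> r then kv j else 0)"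
    by (simp add: sum.distrib)
  also have "\<dots> = msz x + msz t + (\<Sum>j\<in>{1..r}. kv j)"
    using msz_boxsum[OF V(1) bx] msz_boxsum[OF V(2) bt] sum_if_range[OF rJ] by simp
  finally show ?thesis .
qed

lemma jcases:
  fixes j p q :: nat
  obtains (inn) "1 \<le> j" "j \<le> p" "j \<le> q"
  | (zero) "j = 0"
  | (pq) "q < j" "j \<le> p" "1 \<le> j"
  | (qp) "p < j" "j \<le> q" "1 \<le> j"
  | (out) "p < j" "q < j"
  by linarith

lemma hs_le: "hs u v \<Longrightarrow> u i \<le> v i"
  unfolding hs_def by auto

lemma fwd:
  assumes U1: "UpR p b x l" and U2: "UpR q a t l"
  defines "y \<equiv> mf p q x t l" and "kv \<equiv> mk p q x t l"
  defines "k \<equiv> (\<Sum>j\<in>{1..min p q}. kv j)"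
  shows "k \<le> a" "k \<le> b" "UpR q (a - k) y x" "UpR p (b - k) y t" "kv \<in> KVset (min p q) k"
    "mb p q x t y kv = l"
proof -
  have P1: "\<And>j. 1 \<le> j \<Longrightarrow> j \<le> p \<Longrightarrow> hs (x j) (l j)" and P2: "\<And>j. \<not> (1 \<le> j \<and> j \<le> p) \<Longrightarrow> l j = x j"
    and Vx: "VV x" and Vl: "VV l" and ml: "msz l = msz x + b" using U1 unfolding UpR_def by auto
  have Q1: "\<And>j. 1 \<le> j \<Longrightarrow> j \<le> q \<Longrightarrow> hs (t j) (l j)" and Q2: "\<And>j. \<not> (1 \<le> j \<and> j \<le> q) \<Longrightarrow> l j = t j"
    and Vt: "VV t" and ml2: "msz l = msz t + a" using U2 unfolding UpR_def by auto
  have yin: "y j = lf (x j) (t j) (l j)" if "1 \<le> j" "j \<le> p" "j \<le> q" for j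
    using that unfolding y_def mf_def by simp
  have yz: "y 0 = t 0" unfolding y_def mf_def by simp
  have ypq: "y j = x j" if "q < j" for j using that unfolding y_def mf_def by simp
  have yqp: "y j = t j" if "p < j" "j \<le> q" for j using that unfolding y_def mf_def by simp
  have hin: "hs (y j) (x j) \<and> hs (y j) (t j)" if "1 \<le> j" "j \<le> p" "j \<le> q" for j
    using lf_hs[OF P1 Q1] yin that by auto
  have x0: "x 0 = t 0" using P2[of 0] Q2[of 0] by simp
  have yx: "y j i \<le> x j i" for j i
  proof (cases rule: jcases[of j p q])
    case inn then show ?thesis using hs_le[of "y j" "x j" i] hin[OF inn] by simp
  next
    case zero then show ?thesis using yz x0 by simp
  next
    case pq then show ?thesis using ypq by simp
  next
    case qp then show ?thesis using yqp[of j] Q1[of j] P2[of j] hs_le[of "t j" "l j" i] by simp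
  next
    case out then show ?thesis using ypq by simp
  qed
  have yt: "y j i \<le> t j i" for j i
  proof (cases rule: jcases[of j p q])
    case inn then show ?thesis using hs_le[of "y j" "t j" i] hin[OF inn] by simp
  next
    case zero then show ?thesis using yz by simp
  next
    case pq then show ?thesis using ypq[of j] P1[of j] Q2[of j] hs_le[of "x j" "l j" i] by simp
  next
    case qp then show ?thesis using yqp by simp
  next
    case out then show ?thesis using ypq[of j] P2[of j] Q2[of j] by simp
  qed
  have Vy: "VV y" using VV_le[OF Vx yx] .
  have id: "msz l + msz y = msz x + msz t + k"
    unfolding k_def
  proof (rule msz_ident[OF Vx Vt Vl Vy])
    show "\<forall>j. 1 \<le> j \<and> j \<le> min p q \<longrightarrow> hs (x j) (l j) \<and> hs (t j) (l j) \<and> y j = lf (x j) (t j) (l j) \<and> kv j = lk (x j) (t j) (l j)"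
      using P1 Q1 yin unfolding kv_def mk_def by simp
    show "\<forall>j. \<not> (1 \<le> j \<and> j \<le> min p q) \<longrightarrow> (\<forall>i. l j i + y j i = x j i + t j i)"
    proof (intro allI impI)
      fix j i assume nj: "\<not> (1 \<le> j \<and> j \<le> min p q)"
      show "l j i + y j i = x j i + t j i"
      proof (cases rule: jcases[of j p q])
        case inn then show ?thesis using nj by simp
      next
        case zero then show ?thesis using yz P2[of 0] by simp
      next
        case pq then show ?thesis using ypq[of j] Q2[of j] by simp
      next
        case qp then show ?thesis using yqp[of j] P2[of j] by simp
      next
        case out then show ?thesis using ypq[of j] Q2[of j] by simp
      qed
    qed
  qed
  have m1: "msz y \<le> msz x" using msz_mono[OF Vx yx] .
  have m2: "msz y \<le> msz t" using msz_mono[OF Vt yt] .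
  show ka: "k \<le> a" using id ml2 m1 by linarith
  show kb: "k \<le> b" using id ml m2 by linarith
  have mx: "msz x = msz y + (a - k)" using id ml2 m1 ka by linarith
  have mt: "msz t = msz y + (b - k)" using id ml m2 kb by linarith
  show "UpR q (a - k) y x"
    unfolding UpR_def
  proof (intro conjI allI impI)
    fix j assume j: "1 \<le> j \<and> j \<le> q"
    show "hs (y j) (x j)"
    proof (cases "j \<le> p")
      case True then show ?thesis using hin j by simp
    next
      case False then show ?thesis using yqp[of j] P2[of j] Q1[of j] j by simp
    qed
  next
    fix j assume j: "\<not> (1 \<le> j \<and> j \<le> q)"
    show "x j = y j"
    proof (cases "j = 0")
      case True then show ?thesis using yz x0 by simp
    next
      case False then show ?thesis using ypq[of j] j by simp
    qed
  qed (use Vy Vx mx in auto)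
  show "UpR p (b - k) y t"
    unfolding UpR_def
  proof (intro conjI allI impI)
    fix j assume j: "1 \<le> j \<and> j \<le> p"
    show "hs (y j) (t j)"
    proof (cases "j \<le> q")
      case True then show ?thesis using hin j by simp
    next
      case False then show ?thesis using ypq[of j] Q2[of j] P1[of j] j by simp
    qed
  next
    fix j assume j: "\<not> (1 \<le> j \<and> j \<le> p)"
    show "t j = y j"
    proof (cases rule: jcases[of j p q])
      case inn then show ?thesis using j by simp
    next
      case zero then show ?thesis using yz by simp
    next
      case pq then show ?thesis using j by simp
    next
      case qp then show ?thesis using yqp by simp
    next
      case out then show ?thesis using ypq[of j] P2[of j] Q2[of j] by simp
    qed
  qed (use Vy Vt mt in auto)
  show "kv \<in> KVset (min p q) k" unfolding KVset_def k_def kv_def mk_def by simp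
  show "mb p q x t y kv = l"
  proof
    fix j
    show "mb p q x t y kv j = l j"
    proof (cases rule: jcases[of j p q])
      case inn then show ?thesis unfolding mb_def kv_def mk_def using yin lb_lf[OF P1 Q1] by simp
    next
      case zero then show ?thesis unfolding mb_def using Q2[of 0] by simp
    next
      case pq then show ?thesis unfolding mb_def using Q2[of j] by simp
    next
      case qp then show ?thesis unfolding mb_def using P2[of j] by simp
    next
      case out then show ?thesis unfolding mb_def using P2[of j] by simp
    qed
  qed
qed

lemma bwd:
  assumes ka: "k \<le> a" and kb: "k \<le> b" and kv: "kv \<in> KVset (min p q) k"
    and U1: "UpR q (a - k) y x" and U2: "UpR p (b - k) y t"
  defines "l \<equiv> mb p q x t y kv"
  shows "UpR p b x l" "UpR q a t l" "mf p q x t l = y" "mk p q x t l = kv"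
proof -
  have R1: "\<And>j. 1 \<le> j \<Longrightarrow> j \<le> q \<Longrightarrow> hs (y j) (x j)" and R2: "\<And>j. \<not> (1 \<le> j \<and> j \<le> q) \<Longrightarrow> x j = y j"
    and Vy: "VV y" and Vx: "VV x" and mx: "msz x = msz y + (a - k)" using U1 unfolding UpR_def by auto
  have S1: "\<And>j. 1 \<le> j \<Longrightarrow> j \<le> p \<Longrightarrow> hs (y j) (t j)" and S2: "\<And>j. \<not> (1 \<le> j \<and> j \<le> p) \<Longrightarrow> t j = y j"
    and Vt: "VV t" and mt: "msz t = msz y + (b - k)" using U2 unfolding UpR_def by auto
  have kv0: "\<And>j. \<not> (1 \<le> j \<and> j \<le> min p q) \<Longrightarrow> kv j = 0" and kvs: "(\<Sum>j\<in>{1..min p q}. kv j) = k"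
    using kv unfolding KVset_def by auto
  have lin: "l j = lb (x j) (t j) (y j) (kv j)" if "1 \<le> j" "j \<le> p" "j \<le> q" for j
    using that unfolding l_def mb_def by simp
  have lz: "l 0 = t 0" unfolding l_def mb_def by simp
  have lpq: "l j = t j" if "q < j" "j \<le> p" "1 \<le> j" for j using that unfolding l_def mb_def by simp
  have lqp: "l j = x j" if "p < j" for j using that unfolding l_def mb_def by simp
  have x0: "x 0 = t 0" using R2[of 0] S2[of 0] by simp
  have hin: "hs (x j) (l j) \<and> hs (t j) (l j)" if "1 \<le> j" "j \<le> p" "j \<le> q" for j
  proof -
    have h: "hs (y j) (x j)" "hs (y j) (t j)" using R1 S1 that by auto
    show ?thesis using lb_hs[OF h, of "kv j"] lin[OF that] by simp
  qed
  have C1: "\<forall>j. 1 \<le> j \<and> j \<le> p \<longrightarrow> hs (x j) (l j)"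
  proof (intro allI impI)
    fix j assume j: "1 \<le> j \<and> j \<le> p"
    show "hs (x j) (l j)"
    proof (cases "j \<le> q")
      case True then show ?thesis using hin j by simp
    next
      case False then show ?thesis using lpq[of j] R2[of j] S1[of j] j by simp
    qed
  qed
  have C2: "\<forall>j. \<not> (1 \<le> j \<and> j \<le> p) \<longrightarrow> l j = x j"
  proof (intro allI impI)
    fix j assume j: "\<not> (1 \<le> j \<and> j \<le> p)"
    show "l j = x j"
    proof (cases "j = 0")
      case True then show ?thesis using lz x0 by simp
    next
      case False then show ?thesis using lqp j by simp
    qed
  qed
  have Vl: "VV l" using VV_hs[OF Vx C1 C2] .
  have D1: "\<forall>j. 1 \<le> j \<and> j \<le> q \<longrightarrow> hs (t j) (l j)"
  proof (intro allI impI)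
    fix j assume j: "1 \<le> j \<and> j \<le> q"
    show "hs (t j) (l j)"
    proof (cases "j \<le> p")
      case True then show ?thesis using hin j by simp
    next
      case False then show ?thesis using lqp[of j] S2[of j] R1[of j] j by simp
    qed
  qed
  have D2: "\<forall>j. \<not> (1 \<le> j \<and> j \<le> q) \<longrightarrow> l j = t j"
  proof (intro allI impI)
    fix j assume j: "\<not> (1 \<le> j \<and> j \<le> q)"
    show "l j = t j"
    proof (cases rule: jcases[of j p q])
      case inn then show ?thesis using j by simp
    next
      case zero then show ?thesis using lz by simp
    next
      case pq then show ?thesis using lpq by simp
    next
      case qp then show ?thesis using j by simp
    next
      case out then show ?thesis using lqp[of j] R2[of j] S2[of j] by simp
    qed
  qed
  have yin: "y j = lf (x j) (t j) (l j) \<and> kv j = lk (x j) (t j) (l j)" if "1 \<le> j" "j \<le> p" "j \<le> q" for j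
  proof -
    have h: "hs (y j) (x j)" "hs (y j) (t j)" using R1 S1 that by auto
    show ?thesis using lf_lb[OF h, of "kv j"] lin[OF that] by simp
  qed
  have id: "msz l + msz y = msz x + msz t + (\<Sum>j\<in>{1..min p q}. kv j)"
  proof (rule msz_ident[OF Vx Vt Vl Vy])
    show "\<forall>j. 1 \<le> j \<and> j \<le> min p q \<longrightarrow> hs (x j) (l j) \<and> hs (t j) (l j) \<and> y j = lf (x j) (t j) (l j) \<and> kv j = lk (x j) (t j) (l j)"
      using hin yin by simp
    show "\<forall>j. \<not> (1 \<le> j \<and> j \<le> min p q) \<longrightarrow> (\<forall>i. l j i + y j i = x j i + t j i)"
    proof (intro allI impI)
      fix j i assume nj: "\<not> (1 \<le> j \<and> j \<le> min p q)"
      show "l j i + y j i = x j i + t j i"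
      proof (cases rule: jcases[of j p q])
        case inn then show ?thesis using nj by simp
      next
        case zero then show ?thesis using lz R2[of 0] by simp
      next
        case pq then show ?thesis using lpq[of j] R2[of j] by simp
      next
        case qp then show ?thesis using lqp[of j] S2[of j] by simp
      next
        case out then show ?thesis using lqp[of j] S2[of j] by simp
      qed
    qed
  qed
  show "UpR p b x l" unfolding UpR_def using C1 C2 Vx Vl id kvs mx mt ka kb by auto
  show "UpR q a t l" unfolding UpR_def using D1 D2 Vt Vl id kvs mx mt ka kb by auto
  show "mf p q x t l = y"
  proof
    fix j
    show "mf p q x t l j = y j"
    proof (cases rule: jcases[of j p q])
      case inn then show ?thesis unfolding mf_def using yin by simp
    next
      case zero then show ?thesis unfolding mf_def using S2[of 0] by simp
    next
      case pq then show ?thesis unfolding mf_def using R2[of j] by simp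
    next
      case qp then show ?thesis unfolding mf_def using S2[of j] by simp
    next
      case out then show ?thesis unfolding mf_def using R2[of j] by simp
    qed
  qed
  show "mk p q x t l = kv"
  proof
    fix j
    show "mk p q x t l j = kv j"
    proof (cases "1 \<le> j \<and> j \<le> min p q")
      case True then show ?thesis unfolding mk_def using yin by simp
    next
      case False then have "kv j = 0" using kv0 by blast
      then show ?thesis unfolding mk_def using False by auto
    qed
  qed
qed

lemma UpR_le: "UpR p b x y \<Longrightarrow> x j i \<le> y j i"
  unfolding UpR_def hs_def by (cases "1 \<le> j \<and> j \<le> p") auto

lemma finite_KVset: "finite (KVset r k)"
proof -
  have "KVset r k \<subseteq> {f :: nat \<Rightarrow> nat. (\<forall>x. x \<notin> {1..r} \<longrightarrow> f x = (\<lambda>_. 0) x) \<and> (\<forall>x\<in>{1..r}. f x \<in> {..k})}"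
  proof
    fix kv assume "kv \<in> KVset r k"
    then have a: "\<forall>j. \<not> (1 \<le> j \<and> j \<le> r) \<longrightarrow> kv j = 0" "(\<Sum>j\<in>{1..r}. kv j) = k" unfolding KVset_def by auto
    have "\<forall>x\<in>{1..r}. kv x \<in> {..k}"
    proof
      fix x assume "x \<in> {1..r}"
      then have "kv x \<le> (\<Sum>j\<in>{1..r}. kv j)" by (intro member_le_sum) auto
      then show "kv x \<in> {..k}" using a(2) by simp
    qed
    then show "kv \<in> {f :: nat \<Rightarrow> nat. (\<forall>x. x \<notin> {1..r} \<longrightarrow> f x = (\<lambda>_. 0) x) \<and> (\<forall>x\<in>{1..r}. f x \<in> {..k})}"
      using a(1) by auto
  qed
  moreover have "finite {f :: nat \<Rightarrow> nat. (\<forall>x. x \<notin> {1..r} \<longrightarrow> f x = (\<lambda>_. 0) x) \<and> (\<forall>x\<in>{1..r}. f x \<in> {..k})}"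
    by (rule fin_funs) auto
  ultimately show ?thesis by (rule finite_subset)
qed

lemma finite_Kset:
  assumes "VV x"
  shows "finite (Kset p q b a x t k)"
proof -
  have "Kset p q b a x t k \<subseteq> {y. \<forall>j i. y j i \<le> x j i}"
    unfolding Kset_def using UpR_le by blast
  then show ?thesis using fin_le[OF assms] by (rule finite_subset)
qed

lemma local_card:
  assumes "VV x" "VV t"
  shows "card (Lset p q b a x t) = (\<Sum>k\<le>min a b. card (KVset (min p q) k) * card (Kset p q b a x t k))"
proof -
  define SG where "SG = (\<Union>k\<in>{..min a b}. KVset (min p q) k \<times> Kset p q b a x t k)"
  have "bij_betw (\<lambda>l. (mk p q x t l, mf p q x t l)) (Lset p q b a x t) SG"
  proof (rule bij_betw_byWitness[where f'="\<lambda>(kv, y). mb p q x t y kv"])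
    show "\<forall>l\<in>Lset p q b a x t. (\<lambda>(kv, y). mb p q x t y kv) (mk p q x t l, mf p q x t l) = l"
      unfolding Lset_def using fwd(6) by auto
    show "\<forall>z\<in>SG. (\<lambda>l. (mk p q x t l, mf p q x t l)) ((\<lambda>(kv, y). mb p q x t y kv) z) = z"
    proof
      fix z assume "z \<in> SG"
      then obtain k kv y where z: "z = (kv, y)" "k \<le> min a b" "kv \<in> KVset (min p q) k" "y \<in> Kset p q b a x t k"
        unfolding SG_def by auto
      then have u: "UpR q (a - k) y x" "UpR p (b - k) y t" unfolding Kset_def by auto
      show "(\<lambda>l. (mk p q x t l, mf p q x t l)) ((\<lambda>(kv, y). mb p q x t y kv) z) = z"
        using bwd(3,4)[of k a b kv p q y x t] z u by simp
    qed
    show "(\<lambda>l. (mk p q x t l, mf p q x t l)) ` Lset p q b a x t \<subseteq> SG"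
    proof
      fix z assume "z \<in> (\<lambda>l. (mk p q x t l, mf p q x t l)) ` Lset p q b a x t"
      then obtain l where l: "z = (mk p q x t l, mf p q x t l)" "UpR p b x l" "UpR q a t l"
        unfolding Lset_def by auto
      let ?k = "\<Sum>j\<in>{1..min p q}. mk p q x t l j"
      have "?k \<le> min a b" using fwd(1,2)[OF l(2,3)] by simp
      moreover have "mk p q x t l \<in> KVset (min p q) ?k" using fwd(5)[OF l(2,3)] .
      moreover have "mf p q x t l \<in> Kset p q b a x t ?k" using fwd(3,4)[OF l(2,3)] unfolding Kset_def by simp
      ultimately show "z \<in> SG" unfolding SG_def l(1) by blast
    qed
    show "(\<lambda>(kv, y). mb p q x t y kv) ` SG \<subseteq> Lset p q b a x t"
    proof
      fix w assume "w \<in> (\<lambda>(kv, y). mb p q x t y kv) ` SG"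
      then obtain k kv y where z: "w = mb p q x t y kv" "k \<le> min a b" "kv \<in> KVset (min p q) k" "y \<in> Kset p q b a x t k"
        unfolding SG_def by auto
      then have u: "UpR q (a - k) y x" "UpR p (b - k) y t" unfolding Kset_def by auto
      show "w \<in> Lset p q b a x t"
        using bwd(1,2)[of k a b kv p q y x t] z u unfolding Lset_def by simp
    qed
  qed
  then have "card (Lset p q b a x t) = card SG" by (rule bij_betw_same_card)
  also have "\<dots> = (\<Sum>k\<le>min a b. card (KVset (min p q) k \<times> Kset p q b a x t k))"
    unfolding SG_def
  proof (rule card_UN_disjoint)
    show "finite {..min a b}" by simp
    show "\<forall>k\<in>{..min a b}. finite (KVset (min p q) k \<times> Kset p q b a x t k)"
      using finite_KVset finite_Kset[OF assms(1)] by blast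
    show "\<forall>k\<in>{..min a b}. \<forall>k'\<in>{..min a b}. k \<noteq> k' \<longrightarrow>
        KVset (min p q) k \<times> Kset p q b a x t k \<inter> KVset (min p q) k' \<times> Kset p q b a x t k' = {}"
      unfolding KVset_def by auto
  qed
  also have "\<dots> = (\<Sum>k\<le>min a b. card (KVset (min p q) k) * card (Kset p q b a x t k))"
    by (simp add: card_cartesian_product)
  finally show ?thesis .
qed


datatype opr = U nat nat | D nat nat

fun stp :: "opr \<Rightarrow> st \<Rightarrow> st \<Rightarrow> bool" where
  "stp (U p b) x y = UpR p b x y"
| "stp (D q a) x y = UpR q a y x"

lemma stp_U[simp]: "stp (U p b) x = UpR p b x" by (rule ext) simp
lemma stp_D[simp]: "stp (D q a) x = (\<lambda>y. UpR q a y x)" by (rule ext) simp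

fun paths :: "st \<Rightarrow> opr list \<Rightarrow> st \<Rightarrow> nat" where
  "paths x [] z = (if x = z then 1 else 0)"
| "paths x (o1 # os) z = (\<Sum>y\<in>{y. stp o1 x y}. paths y os z)"

lemma msz_gain:
  assumes "VV y" "\<And>j i. x j i \<le> y j i"
  shows "msz x + (y j i - x j i) \<le> msz y"
proof -
  let ?E = "(\<lambda>c. (j, Suc i, c)) ` {x j i<..y j i}"
  have d: "CG x \<inter> ?E = {}" unfolding CG_def by auto
  have s: "CG x \<union> ?E \<subseteq> CG y" using CG_mono[of x y] assms(2) unfolding CG_def by (auto intro: le_trans)
  have fx: "finite (CG x)" using finite_CG[OF VV_le[OF assms(1)]] assms(2) by blast
  have "card ?E = y j i - x j i" by (subst card_image) (auto simp: inj_on_def)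
  then have "card (CG x \<union> ?E) = msz x + (y j i - x j i)" unfolding msz_def using d fx by (subst card_Un_disjoint) auto
  moreover have "card (CG x \<union> ?E) \<le> msz y" unfolding msz_def using s finite_CG[OF assms(1)] by (rule card_mono[rotated])
  ultimately show ?thesis by simp
qed

lemma finite_succ: "finite {y. UpR p b x y}"
proof (cases "VV x")
  case False then show ?thesis unfolding UpR_def by simp
next
  case True
  obtain J N where bx: "\<forall>j i. x j i \<noteq> 0 \<longrightarrow> j < J \<and> i < N" using VV_bound[OF True] by blast
  define J' where "J' = J + Suc p"
  define B where "B = Max (case_prod x ` ({..<J} \<times> {..<N})) + b"
  have "{y. UpR p b x y} \<subseteq> {f :: st. (\<forall>j i. (j, i) \<notin> {..<J'} \<times> {..<Suc N} \<longrightarrow> f j i = (\<lambda>_ _. 0) j i) \<and>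
       (\<forall>j i. (j, i) \<in> {..<J'} \<times> {..<Suc N} \<longrightarrow> f j i \<le> B)}"
  proof (rule subsetI)
    fix y assume "y \<in> {y. UpR p b x y}"
    then have u: "UpR p b x y" by simp
    then have h1: "\<And>j. 1 \<le> j \<Longrightarrow> j \<le> p \<Longrightarrow> hs (x j) (y j)" and h2: "\<And>j. \<not> (1 \<le> j \<and> j \<le> p) \<Longrightarrow> y j = x j"
      and Vy: "VV y" and m: "msz y = msz x + b" unfolding UpR_def by auto
    have 1: "y j i = 0" if "(j, i) \<notin> {..<J'} \<times> {..<Suc N}" for j i
    proof (cases "1 \<le> j \<and> j \<le> p")
      case True
      then have "i \<ge> Suc N" using that unfolding J'_def by auto
      then obtain i' where i': "i = Suc i'" "i' \<ge> N" by (cases i) auto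
      have "y j (Suc i') \<le> x j i'" using h1 True unfolding hs_def by auto
      moreover have "x j i' = 0" using bx i' by (meson leD)
      ultimately show ?thesis using i' by simp
    next
      case False
      then have "y j i = x j i" using h2 by simp
      moreover have "x j i = 0" using bx that unfolding J'_def by fastforce
      ultimately show ?thesis by simp
    qed
    have 2: "y j i \<le> B" for j i
    proof -
      have le: "\<And>j i. x j i \<le> y j i" using UpR_le[OF u] by blast
      have "msz x + (y j i - x j i) \<le> msz y" by (rule msz_gain[OF Vy le])
      then have a: "y j i \<le> x j i + b" using m le[of j i] by linarith
      have "x j i \<le> Max (case_prod x ` ({..<J} \<times> {..<N}))"
      proof (cases "x j i = 0")
        case True then show ?thesis by simp
      next
        case False
        then have "(j, i) \<in> {..<J} \<times> {..<N}" using bx by auto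
        then have "x j i \<in> case_prod x ` ({..<J} \<times> {..<N})" by (intro image_eqI[of _ _ "(j, i)"]) auto
        moreover have "finite (case_prod x ` ({..<J} \<times> {..<N}))" by simp
        ultimately show ?thesis by (intro Max_ge)
      qed
      then show ?thesis using a unfolding B_def by linarith
    qed
    show "y \<in> {f :: st. (\<forall>j i. (j, i) \<notin> {..<J'} \<times> {..<Suc N} \<longrightarrow> f j i = (\<lambda>_ _. 0) j i) \<and>
       (\<forall>j i. (j, i) \<in> {..<J'} \<times> {..<Suc N} \<longrightarrow> f j i \<le> B)}" using 1 2 by simp
  qed
  moreover have "finite {f :: st. (\<forall>j i. (j, i) \<notin> {..<J'} \<times> {..<Suc N} \<longrightarrow> f j i = (\<lambda>_ _. 0) j i) \<and>
       (\<forall>j i. (j, i) \<in> {..<J'} \<times> {..<Suc N} \<longrightarrow> f j i \<le> B)}"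
    by (rule fin_funs2) simp
  ultimately show ?thesis by (rule finite_subset)
qed

lemma finite_pred: "finite {y. UpR q a y x}"
proof (cases "VV x")
  case False then show ?thesis unfolding UpR_def by simp
next
  case True
  have "{y. UpR q a y x} \<subseteq> {y. \<forall>j i. y j i \<le> x j i}" using UpR_le by blast
  then show ?thesis using fin_le[OF True] by (rule finite_subset)
qed

lemma finite_stp: "finite {y. stp o1 x y}"
  by (cases o1) (simp_all add: finite_succ finite_pred)

lemma finite_reach: "finite {z. paths x xs z \<noteq> 0}"
proof (induction xs arbitrary: x)
  case Nil
  have "{z. paths x [] z \<noteq> 0} \<subseteq> {x}" by auto
  then show ?case using finite_subset by blast
next
  case (Cons o1 xs)
  have "{z. paths x (o1 # xs) z \<noteq> 0} \<subseteq> (\<Union>y\<in>{y. stp o1 x y}. {z. paths y xs z \<noteq> 0})"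
  proof
    fix z assume "z \<in> {z. paths x (o1 # xs) z \<noteq> 0}"
    then have "(\<Sum>y\<in>{y. stp o1 x y}. paths y xs z) \<noteq> 0" by simp
    then obtain y where "y \<in> {y. stp o1 x y}" "paths y xs z \<noteq> 0" by (meson sum.neutral)
    then show "z \<in> (\<Union>y\<in>{y. stp o1 x y}. {z. paths y xs z \<noteq> 0})" by blast
  qed
  moreover have "finite (\<Union>y\<in>{y. stp o1 x y}. {z. paths y xs z \<noteq> 0})"
    using finite_stp Cons.IH by blast
  ultimately show ?case by (rule finite_subset)
qed

lemma paths_append:
  assumes "finite T" "\<forall>z. paths x xs z \<noteq> 0 \<longrightarrow> z \<in> T"
  shows "paths x (xs @ ys) w = (\<Sum>z\<in>T. paths x xs z * paths z ys w)"
  using assms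
proof (induction xs arbitrary: x)
  case Nil
  then have xT: "x \<in> T" by simp
  have "(\<Sum>z\<in>T. paths x [] z * paths z ys w) = (\<Sum>z\<in>T. if x = z then paths z ys w else 0)"
    by (intro sum.cong) auto
  also have "\<dots> = paths x ys w" using xT Nil.prems(1) by (simp add: sum.delta)
  finally show ?case by simp
next
  case (Cons o1 xs)
  let ?S = "{y. stp o1 x y}"
  have fS: "finite ?S" by (rule finite_stp)
  have "paths x ((o1 # xs) @ ys) w = (\<Sum>y\<in>?S. paths y (xs @ ys) w)" by simp
  also have "\<dots> = (\<Sum>y\<in>?S. \<Sum>z\<in>T. paths y xs z * paths z ys w)"
  proof (rule sum.cong[OF refl])
    fix y assume y: "y \<in> ?S"
    have "\<forall>z. paths y xs z \<noteq> 0 \<longrightarrow> z \<in> T"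
    proof (intro allI impI)
      fix z assume "paths y xs z \<noteq> 0"
      moreover have "paths y xs z \<le> (\<Sum>y\<in>?S. paths y xs z)" using y fS by (intro member_le_sum) auto
      ultimately have "paths x (o1 # xs) z \<noteq> 0" by simp
      then show "z \<in> T" using Cons.prems(2) by blast
    qed
    then show "paths y (xs @ ys) w = (\<Sum>z\<in>T. paths y xs z * paths z ys w)"
      using Cons.IH Cons.prems(1) by blast
  qed
  also have "\<dots> = (\<Sum>z\<in>T. \<Sum>y\<in>?S. paths y xs z * paths z ys w)" by (rule sum.swap)
  also have "\<dots> = (\<Sum>z\<in>T. paths x (o1 # xs) z * paths z ys w)"
    by (simp add: sum_distrib_right)
  finally show ?case .
qed

lemma sum_swap_card:
  assumes "finite A" "finite T" "\<forall>x\<in>A. B x \<subseteq> T"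
  shows "(\<Sum>x\<in>A. \<Sum>y\<in>B x. (f y :: nat)) = (\<Sum>y\<in>T. card {x\<in>A. y \<in> B x} * f y)"
proof -
  have "(\<Sum>x\<in>A. \<Sum>y\<in>B x. f y) = (\<Sum>x\<in>A. \<Sum>y\<in>T. if y \<in> B x then f y else 0)"
  proof (rule sum.cong[OF refl])
    fix x assume "x \<in> A"
    then have "B x \<subseteq> T" using assms(3) by blast
    then show "(\<Sum>y\<in>B x. f y) = (\<Sum>y\<in>T. if y \<in> B x then f y else 0)"
      using assms(2) by (simp add: sum.If_cases Int_absorb1)
  qed
  also have "\<dots> = (\<Sum>y\<in>T. \<Sum>x\<in>A. if y \<in> B x then f y else 0)" by (rule sum.swap)
  also have "\<dots> = (\<Sum>y\<in>T. card {x\<in>A. y \<in> B x} * f y)"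
  proof (rule sum.cong[OF refl])
    fix y
    have "(\<Sum>x\<in>A. if y \<in> B x then f y else 0) = (\<Sum>x\<in>{x\<in>A. y \<in> B x}. f y)"
      by (rule sum.inter_filter[OF assms(1), symmetric])
    then show "(\<Sum>x\<in>A. if y \<in> B x then f y else 0) = card {x\<in>A. y \<in> B x} * f y" by simp
  qed
  finally show ?thesis .
qed

lemma UpR_VV: "UpR p b x y \<Longrightarrow> VV x \<and> VV y"
  unfolding UpR_def by simp

lemma HC:
  "paths x (U p b # D q a # rest) w =
     (\<Sum>k\<le>min a b. card (KVset (min p q) k) * paths x (D q (a - k) # U p (b - k) # rest) w)"
proof (cases "VV x")
  case False
  then have e: "Collect (UpR p b x) = {}" "\<And>k. {y. UpR q (a - k) y x} = {}" unfolding UpR_def by auto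
  show ?thesis by (simp only: paths.simps stp_U stp_D e sum.empty mult_0_right sum.neutral_const)
next
  case Vx: True
  let ?f = "\<lambda>t. paths t rest w"
  let ?S1 = "{l. UpR p b x l}"
  let ?P = "\<lambda>l. {t. UpR q a t l}"
  let ?Pk = "\<lambda>k. {y. UpR q (a - k) y x}"
  let ?Sk = "\<lambda>k y. {t. UpR p (b - k) y t}"
  define T where "T = (\<Union>l\<in>?S1. ?P l) \<union> (\<Union>k\<in>{..min a b}. \<Union>y\<in>?Pk k. ?Sk k y)"
  have fT: "finite T" unfolding T_def
    by (intro finite_UnI finite_UN_I finite_atMost finite_pred finite_succ)
  have VT: "VV t" if "t \<in> T" for t using that unfolding T_def using UpR_VV by blast
  have "paths x (U p b # D q a # rest) w = (\<Sum>l\<in>?S1. \<Sum>t\<in>?P l. ?f t)" by simp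
  also have "\<dots> = (\<Sum>t\<in>T. card {l\<in>?S1. t \<in> ?P l} * ?f t)"
    by (rule sum_swap_card[OF finite_succ fT]) (auto simp: T_def)
  also have "\<dots> = (\<Sum>t\<in>T. card (Lset p q b a x t) * ?f t)"
    unfolding Lset_def by simp
  also have "\<dots> = (\<Sum>t\<in>T. (\<Sum>k\<le>min a b. card (KVset (min p q) k) * card (Kset p q b a x t k)) * ?f t)"
    using local_card[OF Vx VT] by simp
  also have "\<dots> = (\<Sum>k\<le>min a b. card (KVset (min p q) k) * (\<Sum>t\<in>T. card (Kset p q b a x t k) * ?f t))"
    by (simp add: sum_distrib_right sum_distrib_left mult.assoc sum.swap[of _ T])
  also have "\<dots> = (\<Sum>k\<le>min a b. card (KVset (min p q) k) * (\<Sum>y\<in>?Pk k. \<Sum>t\<in>?Sk k y. ?f t))"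
  proof (rule sum.cong[OF refl])
    fix k assume k: "k \<in> {..min a b}"
    have "(\<Sum>y\<in>?Pk k. \<Sum>t\<in>?Sk k y. ?f t) = (\<Sum>t\<in>T. card {y\<in>?Pk k. t \<in> ?Sk k y} * ?f t)"
      by (rule sum_swap_card[OF finite_pred fT]) (use k in \<open>auto simp: T_def\<close>)
    also have "\<dots> = (\<Sum>t\<in>T. card (Kset p q b a x t k) * ?f t)" unfolding Kset_def by simp
    finally show "card (KVset (min p q) k) * (\<Sum>t\<in>T. card (Kset p q b a x t k) * ?f t) =
        card (KVset (min p q) k) * (\<Sum>y\<in>?Pk k. \<Sum>t\<in>?Sk k y. ?f t)" by simp
  qed
  also have "\<dots> = (\<Sum>k\<le>min a b. card (KVset (min p q) k) * paths x (D q (a - k) # U p (b - k) # rest) w)"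
    by simp
  finally show ?thesis .
qed


definition W :: "nat \<Rightarrow> nat \<Rightarrow> nat" where "W r k = card (KVset r k)"

definition ups :: "('c \<Rightarrow> nat) \<Rightarrow> ('c \<Rightarrow> nat) \<Rightarrow> 'c list \<Rightarrow> opr list" where
  "ups lv cs X = map (\<lambda>c. U (lv c) (cs c)) X"

definition KV :: "'c list \<Rightarrow> ('c \<Rightarrow> nat) \<Rightarrow> nat \<Rightarrow> ('c \<Rightarrow> nat) set" where
  "KV X cs a = {v. (\<forall>c. c \<notin> set X \<longrightarrow> v c = 0) \<and> (\<forall>c. v c \<le> cs c) \<and> (\<Sum>c\<in>set X. v c) \<le> a}"

definition wt :: "('c \<Rightarrow> nat) \<Rightarrow> nat \<Rightarrow> 'c list \<Rightarrow> ('c \<Rightarrow> nat) \<Rightarrow> nat" where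
  "wt lv q X v = (\<Prod>c\<in>set X. W (min (lv c) q) (v c))"

lemma finite_KV: "finite (KV X cs a)"
proof -
  have "KV X cs a \<subseteq> {f. (\<forall>x. x \<notin> set X \<longrightarrow> f x = (\<lambda>_. 0) x) \<and> (\<forall>x\<in>set X. f x \<in> {..a})}"
  proof
    fix v assume "v \<in> KV X cs a"
    then have a: "\<forall>c. c \<notin> set X \<longrightarrow> v c = 0" "(\<Sum>c\<in>set X. v c) \<le> a" unfolding KV_def by auto
    have "\<forall>x\<in>set X. v x \<in> {..a}"
    proof
      fix x assume "x \<in> set X"
      then have "v x \<le> (\<Sum>c\<in>set X. v c)" by (intro member_le_sum) auto
      then show "v x \<in> {..a}" using a(2) by simp
    qed
    then show "v \<in> {f. (\<forall>x. x \<notin> set X \<longrightarrow> f x = (\<lambda>_. 0) x) \<and> (\<forall>x\<in>set X. f x \<in> {..a})}" using a(1) by simp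
  qed
  moreover have "finite {f. (\<forall>x. x \<notin> set X \<longrightarrow> f x = (\<lambda>_. 0) x) \<and> (\<forall>x\<in>set X. f x \<in> {..a})}"
    by (rule fin_funs) auto
  ultimately show ?thesis by (rule finite_subset)
qed

lemma KV_reindex:
  assumes "c \<notin> set X"
  shows "bij_betw (\<lambda>(v', k). v'(c := k)) (SIGMA v':KV X cs a. {..min (a - (\<Sum>c\<in>set X. v' c)) (cs c)}) (KV (c # X) cs a)"
proof (rule bij_betw_byWitness[where f'="\<lambda>v. (v(c := 0), v c)"])
  show "\<forall>z\<in>(SIGMA v':KV X cs a. {..min (a - (\<Sum>c\<in>set X. v' c)) (cs c)}). (\<lambda>v. (v(c := 0), v c)) ((\<lambda>(v', k). v'(c := k)) z) = z"
    using assms unfolding KV_def by auto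
  show "\<forall>v\<in>KV (c # X) cs a. (\<lambda>(v', k). v'(c := k)) ((\<lambda>v. (v(c := 0), v c)) v) = v" by auto
  show "(\<lambda>(v', k). v'(c := k)) ` (SIGMA v':KV X cs a. {..min (a - (\<Sum>c\<in>set X. v' c)) (cs c)}) \<subseteq> KV (c # X) cs a"
  proof
    fix v assume "v \<in> (\<lambda>(v', k). v'(c := k)) ` (SIGMA v':KV X cs a. {..min (a - (\<Sum>c\<in>set X. v' c)) (cs c)})"
    then obtain v' k where v: "v = v'(c := k)" "v' \<in> KV X cs a" "k \<le> min (a - (\<Sum>c\<in>set X. v' c)) (cs c)" by auto
    have s: "(\<Sum>c'\<in>set X. v c') = (\<Sum>c'\<in>set X. v' c')" using assms v(1) by (intro sum.cong) auto
    have "(\<Sum>c'\<in>set (c # X). v c') = k + (\<Sum>c'\<in>set X. v' c')" using assms s v(1) by simp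
    then show "v \<in> KV (c # X) cs a" using v(2,3) unfolding KV_def v(1) by auto
  qed
  show "(\<lambda>v. (v(c := 0), v c)) ` KV (c # X) cs a \<subseteq> (SIGMA v':KV X cs a. {..min (a - (\<Sum>c\<in>set X. v' c)) (cs c)})"
  proof
    fix z assume "z \<in> (\<lambda>v. (v(c := 0), v c)) ` KV (c # X) cs a"
    then obtain v where z: "z = (v(c := 0), v c)" and v: "v \<in> KV (c # X) cs a" by auto
    have s: "(\<Sum>c'\<in>set X. (v(c := 0)) c') = (\<Sum>c'\<in>set X. v c')" using assms by (intro sum.cong) auto
    have t: "(\<Sum>c'\<in>set (c # X). v c') = v c + (\<Sum>c'\<in>set X. v c')" using assms by simp
    have "v(c := 0) \<in> KV X cs a" using v s t unfolding KV_def by auto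
    moreover have "v c \<le> min (a - (\<Sum>c'\<in>set X. (v(c := 0)) c')) (cs c)"
    proof -
      have vc: "v c + (\<Sum>c'\<in>set X. v c') \<le> a" using v t unfolding KV_def by auto
      have "v c \<le> min (a - (\<Sum>c'\<in>set X. v c')) (cs c)" using vc v unfolding KV_def by auto
      then show ?thesis by (simp only: s)
    qed
    ultimately show "z \<in> (SIGMA v':KV X cs a. {..min (a - (\<Sum>c\<in>set X. v' c)) (cs c)})" using z by auto
  qed
qed

lemma L1:
  assumes "distinct X"
  shows "paths x (ups lv cs X @ D q a # rest) w =
    (\<Sum>v\<in>KV X cs a. wt lv q X v * paths x (D q (a - (\<Sum>c\<in>set X. v c)) # ups lv (\<lambda>c. cs c - v c) X @ rest) w)"
  using assms
proof (induction X arbitrary: x)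
  case Nil
  have "KV [] cs a = {\<lambda>_. 0}" unfolding KV_def by auto
  then show ?case by (simp add: ups_def wt_def)
next
  case (Cons c X)
  have cX: "c \<notin> set X" and dX: "distinct X" using Cons.prems by auto
  let ?S = "{y. UpR (lv c) (cs c) x y}"
  let ?R = "\<lambda>v'. ups lv (\<lambda>c. cs c - v' c) X @ rest"
  let ?F = "\<lambda>v' k. wt lv q X v' * (W (min (lv c) q) k * paths x (D q (a - (\<Sum>c\<in>set X. v' c) - k) # U (lv c) (cs c - k) # ?R v') w)"
  have "paths x (ups lv cs (c # X) @ D q a # rest) w = (\<Sum>y\<in>?S. paths y (ups lv cs X @ D q a # rest) w)"
    by (simp add: ups_def)
  also have "\<dots> = (\<Sum>y\<in>?S. \<Sum>v'\<in>KV X cs a. wt lv q X v' * paths y (D q (a - (\<Sum>c\<in>set X. v' c)) # ?R v') w)"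
    using Cons.IH[OF dX] by simp
  also have "\<dots> = (\<Sum>v'\<in>KV X cs a. wt lv q X v' * (\<Sum>y\<in>?S. paths y (D q (a - (\<Sum>c\<in>set X. v' c)) # ?R v') w))"
    by (simp add: sum.swap[of _ ?S] sum_distrib_left)
  also have "\<dots> = (\<Sum>v'\<in>KV X cs a. wt lv q X v' * paths x (U (lv c) (cs c) # D q (a - (\<Sum>c\<in>set X. v' c)) # ?R v') w)"
    by simp
  also have "\<dots> = (\<Sum>v'\<in>KV X cs a. \<Sum>k\<le>min (a - (\<Sum>c\<in>set X. v' c)) (cs c). ?F v' k)"
    by (simp only: HC sum_distrib_left W_def)
  also have "\<dots> = (\<Sum>z\<in>(SIGMA v':KV X cs a. {..min (a - (\<Sum>c\<in>set X. v' c)) (cs c)}). case_prod ?F z)"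
    by (rule sum.Sigma) (auto simp: finite_KV)
  also have "\<dots> = (\<Sum>z\<in>(SIGMA v':KV X cs a. {..min (a - (\<Sum>c\<in>set X. v' c)) (cs c)}).
      (\<lambda>v. wt lv q (c # X) v * paths x (D q (a - (\<Sum>c\<in>set (c # X). v c)) # ups lv (\<lambda>c. cs c - v c) (c # X) @ rest) w)
        ((\<lambda>(v', k). v'(c := k)) z))"
  proof (rule sum.cong[OF refl])
    fix z assume "z \<in> (SIGMA v':KV X cs a. {..min (a - (\<Sum>c\<in>set X. v' c)) (cs c)})"
    then obtain v' k where z: "z = (v', k)" "v' \<in> KV X cs a" by auto
    have s: "(\<Sum>c'\<in>set X. (v'(c := k)) c') = (\<Sum>c'\<in>set X. v' c')" using cX by (intro sum.cong) auto
    have w: "wt lv q (c # X) (v'(c := k)) = W (min (lv c) q) k * wt lv q X v'"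
    proof -
      have "(\<Prod>c'\<in>set X. W (min (lv c') q) ((v'(c := k)) c')) = (\<Prod>c'\<in>set X. W (min (lv c') q) (v' c'))"
        using cX by (intro prod.cong) auto
      then show ?thesis unfolding wt_def using cX by simp
    qed
    have u: "ups lv (\<lambda>c'. cs c' - (v'(c := k)) c') (c # X) = U (lv c) (cs c - k) # ups lv (\<lambda>c. cs c - v' c) X"
      unfolding ups_def using cX by auto
    have t: "a - (\<Sum>c'\<in>set (c # X). (v'(c := k)) c') = a - (\<Sum>c\<in>set X. v' c) - k"
      using cX s by simp
    show "case_prod ?F z = (\<lambda>v. wt lv q (c # X) v * paths x (D q (a - (\<Sum>c\<in>set (c # X). v c)) # ups lv (\<lambda>c. cs c - v c) (c # X) @ rest) w)
        ((\<lambda>(v', k). v'(c := k)) z)"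
      unfolding z(1) using w u t by simp
  qed
  also have "\<dots> = (\<Sum>v\<in>KV (c # X) cs a. wt lv q (c # X) v * paths x (D q (a - (\<Sum>c\<in>set (c # X). v c)) # ups lv (\<lambda>c. cs c - v c) (c # X) @ rest) w)"
    by (rule sum.reindex_bij_betw[OF KV_reindex[OF cX]])
  finally show ?case .
qed

definition E0 :: st where "E0 = (\<lambda>_ _. 0)"

lemma VV_E0: "VV E0" unfolding VV_def E0_def by simp

lemma hs_zero: "hs (\<lambda>_. 0) (\<lambda>_. 0)" unfolding hs_def by simp

lemma le_E0: "(\<And>j i. y j i \<le> E0 j i) \<Longrightarrow> y = E0"
  unfolding E0_def by (intro ext) simp

lemma pred_E0: "UpR q a y E0 \<longleftrightarrow> y = E0 \<and> a = 0"
proof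
  assume u: "UpR q a y E0"
  then have "y = E0" using UpR_le[OF u] by (intro le_E0) blast
  moreover then have "a = 0" using u unfolding UpR_def by simp
  ultimately show "y = E0 \<and> a = 0" by simp
next
  assume "y = E0 \<and> a = 0"
  then show "UpR q a y E0" unfolding UpR_def using VV_E0 by (simp add: E0_def hs_zero)
qed

lemma succ_E0: "UpR p b x E0 \<longleftrightarrow> x = E0 \<and> b = 0"
proof
  assume u: "UpR p b x E0"
  then have "x = E0"
  proof -
    have "x j i \<le> E0 j i" for j i
    proof (cases "1 \<le> j \<and> j \<le> p")
      case True then have "hs (x j) (E0 j)" using u unfolding UpR_def by simp
      then show ?thesis by (rule hs_le)
    next
      case False then have "E0 j = x j" using u unfolding UpR_def by simp
      then show ?thesis by simp
    qed
    then show ?thesis by (intro le_E0)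
  qed
  moreover then have "b = 0" using u unfolding UpR_def by simp
  ultimately show "x = E0 \<and> b = 0" by simp
next
  assume "x = E0 \<and> b = 0"
  then show "UpR p b x E0" unfolding UpR_def using VV_E0 by (simp add: E0_def hs_zero)
qed

lemma paths_D_E0: "paths E0 (D q a # rest) w = (if a = 0 then paths E0 rest w else 0)"
proof -
  have "{y. UpR q a y E0} = (if a = 0 then {E0} else {})" using pred_E0 by auto
  then show ?thesis by simp
qed

lemma paths_ups_E0: "paths x (ups lv cs X) E0 = (if x = E0 \<and> (\<forall>c\<in>set X. cs c = 0) then 1 else 0)"
proof (induction X arbitrary: x)
  case Nil then show ?case by (simp add: ups_def)
next
  case (Cons c X)
  have "paths x (ups lv cs (c # X)) E0 = (\<Sum>y\<in>{y. UpR (lv c) (cs c) x y}. if y = E0 \<and> (\<forall>c\<in>set X. cs c = 0) then 1 else 0)"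
    using Cons.IH by (simp add: ups_def)
  also have "\<dots> = (if x = E0 \<and> (\<forall>c\<in>set (c # X). cs c = 0) then 1 else 0)"
  proof (cases "\<forall>c\<in>set X. cs c = 0")
    case True
    have "(\<Sum>y\<in>{y. UpR (lv c) (cs c) x y}. if y = E0 \<and> (\<forall>c\<in>set X. cs c = 0) then 1 else 0) =
        (\<Sum>y\<in>{y. UpR (lv c) (cs c) x y}. if y = E0 then 1 else 0)" using True by simp
    also have "\<dots> = (if E0 \<in> {y. UpR (lv c) (cs c) x y} then 1 else 0)"
      using finite_succ[of "lv c" "cs c" x] by (simp add: sum.delta')
    also have "\<dots> = (if x = E0 \<and> (\<forall>c\<in>set (c # X). cs c = 0) then 1 else 0)"
      using succ_E0[of "lv c" "cs c" x] True by auto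
    finally show ?thesis .
  next
    case False
    have s0: "(\<Sum>y\<in>{y. UpR (lv c) (cs c) x y}. if y = E0 \<and> (\<forall>c\<in>set X. cs c = 0) then 1 else 0) = (0::nat)"
    proof -
      have f: "(\<forall>c\<in>set X. cs c = 0) = False" using False by simp
      show ?thesis by (simp only: f simp_thms if_False sum.neutral_const)
    qed
    have r0: "(if x = E0 \<and> (\<forall>c\<in>set (c # X). cs c = 0) then 1 else 0) = (0::nat)" using False by auto
    show ?thesis by (simp only: s0 r0)
  qed
  finally show ?case .
qed

fun Mc :: "('c \<Rightarrow> nat) \<Rightarrow> 'c list \<Rightarrow> ('c \<Rightarrow> nat) \<Rightarrow> (nat \<times> nat) list \<Rightarrow> nat" where
  "Mc lv X cs [] = (if \<forall>c\<in>set X. cs c = 0 then 1 else 0)"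
| "Mc lv X cs (qa # Y) = (\<Sum>v\<in>{v\<in>KV X cs (snd qa). (\<Sum>c\<in>set X. v c) = snd qa}.
      wt lv (fst qa) X v * Mc lv X (\<lambda>c. cs c - v c) Y)"

definition dns :: "(nat \<times> nat) list \<Rightarrow> opr list" where
  "dns Y = map (\<lambda>qa. D (fst qa) (snd qa)) Y"

lemma paths_Mc:
  assumes "distinct X"
  shows "paths E0 (ups lv cs X @ dns Y) E0 = Mc lv X cs Y"
proof (induction Y arbitrary: cs)
  case Nil then show ?case by (simp add: dns_def paths_ups_E0)
next
  case (Cons qa Y)
  obtain q a where qa: "qa = (q, a)" by (cases qa)
  have "paths E0 (ups lv cs X @ dns (qa # Y)) E0 = paths E0 (ups lv cs X @ D q a # dns Y) E0"
    by (simp add: dns_def qa)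
  also have "\<dots> = (\<Sum>v\<in>KV X cs a. wt lv q X v * paths E0 (D q (a - (\<Sum>c\<in>set X. v c)) # ups lv (\<lambda>c. cs c - v c) X @ dns Y) E0)"
    by (rule L1[OF assms])
  also have "\<dots> = (\<Sum>v\<in>KV X cs a. if (\<Sum>c\<in>set X. v c) = a then wt lv q X v * Mc lv X (\<lambda>c. cs c - v c) Y else 0)"
  proof (rule sum.cong[OF refl])
    fix v assume v: "v \<in> KV X cs a"
    then have le: "(\<Sum>c\<in>set X. v c) \<le> a" unfolding KV_def by simp
    show "wt lv q X v * paths E0 (D q (a - (\<Sum>c\<in>set X. v c)) # ups lv (\<lambda>c. cs c - v c) X @ dns Y) E0 =
      (if (\<Sum>c\<in>set X. v c) = a then wt lv q X v * Mc lv X (\<lambda>c. cs c - v c) Y else 0)"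
      using le Cons.IH[of "\<lambda>c. cs c - v c"] by (simp del: paths.simps add: paths_D_E0)
  qed
  also have "\<dots> = (\<Sum>v\<in>{v\<in>KV X cs a. (\<Sum>c\<in>set X. v c) = a}. wt lv q X v * Mc lv X (\<lambda>c. cs c - v c) Y)"
    by (rule sum.inter_filter[OF finite_KV, symmetric])
  also have "\<dots> = Mc lv X cs (qa # Y)" by (simp add: qa)
  finally show ?case .
qed


definition ssG :: "st \<Rightarrow> (nat \<times> nat \<times> nat \<Rightarrow> nat \<times> nat) \<Rightarrow> bool" where
  "ssG g T \<longleftrightarrow>
     (\<forall>j r c. (j, r, c) \<in> CG g \<and> (j, r, Suc c) \<in> CG g \<longrightarrow> sym_le (T (j, r, c)) (T (j, r, Suc c))) \<and>
     (\<forall>j r c. (j, r, c) \<in> CG g \<and> (j, Suc r, c) \<in> CG g \<longrightarrow> sym_less (T (j, r, c)) (T (j, Suc r, c))) \<and>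
     (\<forall>j r c. (j, r, c) \<in> CG g \<longrightarrow> j \<le> snd (T (j, r, c)))"

definition gT :: "st \<Rightarrow> (nat \<times> nat) set \<Rightarrow> (nat \<times> nat \<Rightarrow> nat) \<Rightarrow> (nat \<times> nat \<times> nat \<Rightarrow> nat \<times> nat) set" where
  "gT g S cnt = {T. (\<forall>x. x \<notin> CG g \<longrightarrow> T x = (0, 0)) \<and> (\<forall>x\<in>CG g. prod.swap (T x) \<in> S) \<and>
      (\<forall>s\<in>S. card {x \<in> CG g. prod.swap (T x) = s} = cnt s) \<and> ssG g T}"

definition shape :: "st \<Rightarrow> bool" where
  "shape g \<longleftrightarrow> (\<forall>r. g 0 r = 0) \<and> (\<forall>j r. g j (Suc r) \<le> g j r)"

lemma sym_less_swap: "sym_less a b \<longleftrightarrow> prod.swap a < prod.swap b"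
  unfolding sym_less_def by (cases a, cases b) auto

lemma sym_le_swap: "sym_le a b \<longleftrightarrow> prod.swap a \<le> prod.swap b"
  unfolding sym_le_def sym_less_swap by (cases a, cases b) auto

lemma CG_iff: "(j, r, c) \<in> CG g \<longleftrightarrow> 1 \<le> r \<and> 1 \<le> c \<and> c \<le> g j (r - 1)"
  unfolding CG_def by simp

lemma CG_left: "(j, r, c) \<in> CG g \<Longrightarrow> 1 \<le> c' \<Longrightarrow> c' \<le> c \<Longrightarrow> (j, r, c') \<in> CG g"
  unfolding CG_iff by simp

lemma finite_gT:
  assumes "VV g" "finite S"
  shows "finite (gT g S cnt)"
proof -
  have "gT g S cnt \<subseteq> {f. (\<forall>x. x \<notin> CG g \<longrightarrow> f x = (\<lambda>_. (0, 0)) x) \<and> (\<forall>x\<in>CG g. f x \<in> prod.swap ` S)}"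
  proof
    fix T assume "T \<in> gT g S cnt"
    then have a: "\<forall>x. x \<notin> CG g \<longrightarrow> T x = (0, 0)" "\<forall>x\<in>CG g. prod.swap (T x) \<in> S" unfolding gT_def by auto
    have "\<forall>x\<in>CG g. T x \<in> prod.swap ` S"
    proof
      fix x assume "x \<in> CG g"
      then have "prod.swap (T x) \<in> S" using a(2) by blast
      then show "T x \<in> prod.swap ` S" by (intro image_eqI[of _ _ "prod.swap (T x)"]) auto
    qed
    then show "T \<in> {f. (\<forall>x. x \<notin> CG g \<longrightarrow> f x = (\<lambda>_. (0, 0)) x) \<and> (\<forall>x\<in>CG g. f x \<in> prod.swap ` S)}"
      using a(1) by simp
  qed
  moreover have "finite {f. (\<forall>x. x \<notin> CG g \<longrightarrow> f x = (\<lambda>_. (0, 0)) x) \<and> (\<forall>x\<in>CG g. f x \<in> prod.swap ` S)}"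
    using finite_CG[OF assms(1)] assms(2) by (intro fin_funs) auto
  ultimately show ?thesis by (rule finite_subset)
qed

lemma dc_interval:
  fixes A :: "nat set"
  assumes "A \<subseteq> {1..n}" "\<forall>c\<in>A. \<forall>c'. 1 \<le> c' \<and> c' \<le> c \<longrightarrow> c' \<in> A"
  shows "A = {1..card A}"
proof (cases "A = {}")
  case True then show ?thesis by simp
next
  case False
  have fA: "finite A" using assms(1) finite_subset by blast
  let ?m = "Max A"
  have mA: "?m \<in> A" using fA False by simp
  have "A = {1..?m}"
  proof
    show "A \<subseteq> {1..?m}" using assms(1) fA by auto
    show "{1..?m} \<subseteq> A" using assms(2) mA by auto
  qed
  moreover then have "card A = ?m" by (metis card_atLeastAtMost diff_Suc_1)
  ultimately show ?thesis by simp
qed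

lemma row_mono:
  assumes "ssG g T" "(j, r, c) \<in> CG g" "1 \<le> c'" "c' \<le> c"
  shows "prod.swap (T (j, r, c')) \<le> prod.swap (T (j, r, c))"
  using assms(2,4)
proof (induction c rule: nat_less_induct)
  case (1 c)
  show ?case
  proof (cases "c' = c")
    case True then show ?thesis by simp
  next
    case False
    then have lt: "c' < c" using 1(3) by simp
    then obtain d where d: "c = Suc d" "c' \<le> d" by (cases c) auto
    have cd: "(j, r, d) \<in> CG g" using CG_left[OF 1(2) _, of d] d assms(3) by simp
    have "prod.swap (T (j, r, c')) \<le> prod.swap (T (j, r, d))" using 1(1) d cd by simp
    moreover have "sym_le (T (j, r, d)) (T (j, r, Suc d))" using assms(1) cd 1(2) d unfolding ssG_def by blast
    ultimately show ?thesis using d unfolding sym_le_swap by simp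
  qed
qed

lemma shape_pred:
  assumes u: "UpR p c g' g" and sh: "shape g"
  shows "shape g'"
  unfolding shape_def
proof (intro conjI allI)
  fix r
  have "g' 0 = g 0" using u unfolding UpR_def by simp
  then show "g' 0 r = 0" using sh unfolding shape_def by simp
next
  fix j r
  show "g' j (Suc r) \<le> g' j r"
  proof (cases "1 \<le> j \<and> j \<le> p")
    case True
    then have "hs (g' j) (g j)" using u unfolding UpR_def by simp
    then have "g' j (Suc r) \<le> g j (Suc r)" "g j (Suc r) \<le> g' j r" unfolding hs_def by auto
    then show ?thesis by simp
  next
    case False
    then have "g j = g' j" using u unfolding UpR_def by simp
    then show ?thesis using sh unfolding shape_def by metis
  qed
qed

lemma shape_succ:
  assumes u: "UpR p c g g2" and sh: "shape g"
  shows "shape g2"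
  unfolding shape_def
proof (intro conjI allI)
  fix r
  have "g2 0 = g 0" using u unfolding UpR_def by simp
  then show "g2 0 r = 0" using sh unfolding shape_def by simp
next
  fix j r
  show "g2 j (Suc r) \<le> g2 j r"
  proof (cases "1 \<le> j \<and> j \<le> p")
    case True
    then have "hs (g j) (g2 j)" using u unfolding UpR_def by simp
    then have "g2 j (Suc r) \<le> g j r" "g j r \<le> g2 j r" unfolding hs_def by auto
    then show ?thesis by simp
  next
    case False
    then have "g2 j = g j" using u unfolding UpR_def by simp
    then show ?thesis using sh unfolding shape_def by metis
  qed
qed

definition gp :: "nat \<times> nat \<Rightarrow> st \<Rightarrow> (nat \<times> nat \<times> nat \<Rightarrow> nat \<times> nat) \<Rightarrow> st" where
  "gp s g T = (\<lambda>j r. card {c \<in> {1..g j r}. prod.swap (T (j, Suc r, c)) \<noteq> s})"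

definition restr :: "st \<Rightarrow> (nat \<times> nat \<times> nat \<Rightarrow> nat \<times> nat) \<Rightarrow> (nat \<times> nat \<times> nat \<Rightarrow> nat \<times> nat)" where
  "restr g' T = (\<lambda>x. if x \<in> CG g' then T x else (0, 0))"

definition extT :: "nat \<times> nat \<Rightarrow> st \<Rightarrow> st \<Rightarrow> (nat \<times> nat \<times> nat \<Rightarrow> nat \<times> nat) \<Rightarrow> (nat \<times> nat \<times> nat \<Rightarrow> nat \<times> nat)" where
  "extT s g g' T' = (\<lambda>x. if x \<in> CG g' then T' x else if x \<in> CG g then prod.swap s else (0, 0))"

context
  fixes g :: st and S :: "(nat \<times> nat) set" and cnt :: "nat \<times> nat \<Rightarrow> nat" and s :: "nat \<times> nat"
  assumes Vg: "VV g" and shg: "shape g" and fS: "finite S" and sS: "s \<in> S"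
    and smax: "\<forall>t\<in>S. t \<le> s" and lev: "1 \<le> fst s"
begin

lemma gT_props:
  assumes "T \<in> gT g S cnt"
  shows "\<And>x. x \<notin> CG g \<Longrightarrow> T x = (0, 0)" "\<And>x. x \<in> CG g \<Longrightarrow> prod.swap (T x) \<in> S"
    "\<And>t. t \<in> S \<Longrightarrow> card {x \<in> CG g. prod.swap (T x) = t} = cnt t" "ssG g T"
  using assms unfolding gT_def by auto

lemma L_prefix:
  assumes T: "T \<in> gT g S cnt"
  shows "{c \<in> {1..g j r}. prod.swap (T (j, Suc r, c)) \<noteq> s} = {1..gp s g T j r}"
proof -
  let ?A = "{c \<in> {1..g j r}. prod.swap (T (j, Suc r, c)) \<noteq> s}"
  have "?A = {1..card ?A}"
  proof (rule dc_interval[of _ "g j r"])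
    show "?A \<subseteq> {1..g j r}" by auto
    show "\<forall>c\<in>?A. \<forall>c'. 1 \<le> c' \<and> c' \<le> c \<longrightarrow> c' \<in> ?A"
    proof (intro ballI allI impI)
      fix c c' assume c: "c \<in> ?A" and c': "1 \<le> c' \<and> c' \<le> c"
      have cell: "(j, Suc r, c) \<in> CG g" using c unfolding CG_iff by auto
      have le: "prod.swap (T (j, Suc r, c')) \<le> prod.swap (T (j, Suc r, c))"
        using row_mono[OF gT_props(4)[OF T] cell] c' by simp
      have inS: "prod.swap (T (j, Suc r, c)) \<in> S" using gT_props(2)[OF T cell] .
      have ne: "prod.swap (T (j, Suc r, c)) \<noteq> s" using c by simp
      have "prod.swap (T (j, Suc r, c')) \<noteq> s"
      proof
        assume "prod.swap (T (j, Suc r, c')) = s"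
        then have "s \<le> prod.swap (T (j, Suc r, c))" using le by simp
        moreover have "prod.swap (T (j, Suc r, c)) \<le> s" using smax inS by blast
        ultimately show False using ne by simp
      qed
      then show "c' \<in> ?A" using c c' by auto
    qed
  qed
  then show ?thesis unfolding gp_def by simp
qed

lemma L_nons:
  assumes T: "T \<in> gT g S cnt" and c: "1 \<le> c" "c \<le> g j r"
  shows "prod.swap (T (j, Suc r, c)) \<noteq> s \<longleftrightarrow> c \<le> gp s g T j r"
proof -
  have "c \<in> {c \<in> {1..g j r}. prod.swap (T (j, Suc r, c)) \<noteq> s} \<longleftrightarrow> c \<in> {1..gp s g T j r}"
    using L_prefix[OF T] by simp
  then show ?thesis using c by simp
qed

lemma L_gp_le: "gp s g T j r \<le> g j r"
  unfolding gp_def by (rule le_trans[OF card_mono[of "{1..g j r}"]]) auto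

lemma L_gp_hs2:
  assumes T: "T \<in> gT g S cnt"
  shows "g j (Suc r) \<le> gp s g T j r"
proof (cases "g j (Suc r) = 0")
  case True then show ?thesis by simp
next
  case False
  let ?c = "g j (Suc r)"
  have sh: "g j (Suc r) \<le> g j r" using shg unfolding shape_def by simp
  have c1: "(j, Suc r, ?c) \<in> CG g" using False sh unfolding CG_iff by simp
  have c2: "(j, Suc (Suc r), ?c) \<in> CG g" using False unfolding CG_iff by simp
  have "sym_less (T (j, Suc r, ?c)) (T (j, Suc (Suc r), ?c))"
    using gT_props(4)[OF T] c1 c2 unfolding ssG_def by blast
  then have lt: "prod.swap (T (j, Suc r, ?c)) < prod.swap (T (j, Suc (Suc r), ?c))" unfolding sym_less_swap .
  have "prod.swap (T (j, Suc (Suc r), ?c)) \<le> s" using smax gT_props(2)[OF T c2] by blast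
  then have "prod.swap (T (j, Suc r, ?c)) \<noteq> s" using lt by auto
  then show ?thesis using L_nons[OF T, of ?c j r] False sh by simp
qed

lemma L_gp_out:
  assumes T: "T \<in> gT g S cnt" and j: "\<not> (1 \<le> j \<and> j \<le> fst s)"
  shows "gp s g T j = g j"
proof
  fix r
  show "gp s g T j r = g j r"
  proof (cases "j = 0")
    case True
    then have "g j r = 0" using shg unfolding shape_def by simp
    then show ?thesis unfolding gp_def by simp
  next
    case False
    then have jp: "fst s < j" using j by simp
    have "{c \<in> {1..g j r}. prod.swap (T (j, Suc r, c)) \<noteq> s} = {1..g j r}"
    proof (intro set_eqI iffI)
      fix c assume c: "c \<in> {1..g j r}"
      then have cell: "(j, Suc r, c) \<in> CG g" unfolding CG_iff by simp
      have "j \<le> snd (T (j, Suc r, c))" using gT_props(4)[OF T] cell unfolding ssG_def by blast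
      then have "fst (prod.swap (T (j, Suc r, c))) \<noteq> fst s" using jp by (simp add: prod.swap_def)
      then show "c \<in> {c \<in> {1..g j r}. prod.swap (T (j, Suc r, c)) \<noteq> s}" using c by auto
    qed simp
    then show ?thesis unfolding gp_def by simp
  qed
qed

lemma L_CG_gp:
  assumes T: "T \<in> gT g S cnt"
  shows "CG (gp s g T) = {x \<in> CG g. prod.swap (T x) \<noteq> s}"
proof (intro set_eqI)
  fix x :: "nat \<times> nat \<times> nat"
  obtain j R c where x: "x = (j, R, c)" by (cases x) auto
  show "x \<in> CG (gp s g T) \<longleftrightarrow> x \<in> {x \<in> CG g. prod.swap (T x) \<noteq> s}"
  proof (cases "1 \<le> R \<and> 1 \<le> c \<and> c \<le> g j (R - 1)")
    case True
    then obtain r where r: "R = Suc r" by (cases R) auto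
    have cell: "(j, Suc r, c) \<in> CG g" using True r by (simp add: CG_iff)
    show ?thesis using L_nons[OF T, of c j r] True cell unfolding x r by (simp add: CG_iff)
  next
    case False
    then show ?thesis unfolding x using L_gp_le[of T j "R - 1"] by (auto simp: CG_iff)
  qed
qed

lemma L_UpR:
  assumes T: "T \<in> gT g S cnt"
  shows "UpR (fst s) (cnt s) (gp s g T) g"
  unfolding UpR_def
proof (intro conjI allI impI)
  fix j assume "1 \<le> j \<and> j \<le> fst s"
  show "hs (gp s g T j) (g j)" unfolding hs_def using L_gp_le L_gp_hs2[OF T] by blast
next
  fix j assume "\<not> (1 \<le> j \<and> j \<le> fst s)"
  then show "g j = gp s g T j" using L_gp_out[OF T] by simp
next
  have le: "\<And>j i. gp s g T j i \<le> g j i" using L_gp_le by blast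
  show V: "VV (gp s g T)" using VV_le[OF Vg le] .
  show "VV g" using Vg .
  have "CG g = CG (gp s g T) \<union> {x \<in> CG g. prod.swap (T x) = s}" using L_CG_gp[OF T] by auto
  moreover have "CG (gp s g T) \<inter> {x \<in> CG g. prod.swap (T x) = s} = {}" using L_CG_gp[OF T] by auto
  moreover have "finite (CG (gp s g T))" using finite_CG[OF V] .
  moreover have "finite {x \<in> CG g. prod.swap (T x) = s}" using finite_CG[OF Vg] by simp
  ultimately have "card (CG g) = card (CG (gp s g T)) + card {x \<in> CG g. prod.swap (T x) = s}"
    using card_Un_disjoint[of "CG (gp s g T)" "{x \<in> CG g. prod.swap (T x) = s}"] by simp
  then show "msz g = msz (gp s g T) + cnt s" unfolding msz_def using gT_props(3)[OF T sS] by simp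
qed

lemma L_restr:
  assumes T: "T \<in> gT g S cnt"
  shows "restr (gp s g T) T \<in> gT (gp s g T) (S - {s}) cnt"
proof -
  let ?g = "gp s g T" and ?T = "restr (gp s g T) T"
  have CGe: "CG ?g = {x \<in> CG g. prod.swap (T x) \<noteq> s}" using L_CG_gp[OF T] .
  have 1: "\<forall>x. x \<notin> CG ?g \<longrightarrow> ?T x = (0, 0)" unfolding restr_def by simp
  have 2: "\<forall>x\<in>CG ?g. prod.swap (?T x) \<in> S - {s}" using CGe gT_props(2)[OF T] unfolding restr_def by auto
  have 3: "\<forall>t\<in>S - {s}. card {x \<in> CG ?g. prod.swap (?T x) = t} = cnt t"
  proof
    fix t assume t: "t \<in> S - {s}"
    have "{x \<in> CG ?g. prod.swap (?T x) = t} = {x \<in> CG g. prod.swap (T x) = t}"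
      using CGe t unfolding restr_def by auto
    then show "card {x \<in> CG ?g. prod.swap (?T x) = t} = cnt t" using gT_props(3)[OF T] t by simp
  qed
  have sub: "CG ?g \<subseteq> CG g" using CGe by auto
  have e: "\<And>x. x \<in> CG ?g \<Longrightarrow> ?T x = T x" unfolding restr_def by simp
  have ss: "ssG g T" using gT_props(4)[OF T] .
  have 4: "ssG ?g ?T"
    unfolding ssG_def
  proof (intro conjI allI impI)
    fix j r c assume a: "(j, r, c) \<in> CG ?g \<and> (j, r, Suc c) \<in> CG ?g"
    then show "sym_le (?T (j, r, c)) (?T (j, r, Suc c))" using ss sub e unfolding ssG_def by (simp add: subset_iff)
  next
    fix j r c assume a: "(j, r, c) \<in> CG ?g \<and> (j, Suc r, c) \<in> CG ?g"
    then show "sym_less (?T (j, r, c)) (?T (j, Suc r, c))" using ss sub e unfolding ssG_def by (simp add: subset_iff)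
  next
    fix j r c assume a: "(j, r, c) \<in> CG ?g"
    then show "j \<le> snd (?T (j, r, c))" using ss sub e unfolding ssG_def by (simp add: subset_iff)
  qed
  show ?thesis unfolding gT_def using 1 2 3 4 by blast
qed

lemma L_back:
  assumes T: "T \<in> gT g S cnt"
  shows "extT s g (gp s g T) (restr (gp s g T) T) = T"
proof
  fix x
  have CGe: "CG (gp s g T) = {x \<in> CG g. prod.swap (T x) \<noteq> s}" using L_CG_gp[OF T] .
  show "extT s g (gp s g T) (restr (gp s g T) T) x = T x"
  proof (cases "x \<in> CG g")
    case True
    show ?thesis
    proof (cases "prod.swap (T x) = s")
      case True
      then have "T x = prod.swap s" by (metis swap_swap)
      moreover have "x \<notin> CG (gp s g T)" using CGe True by simp
      ultimately show ?thesis unfolding extT_def using \<open>x \<in> CG g\<close> by simp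
    next
      case False
      then have "x \<in> CG (gp s g T)" using CGe \<open>x \<in> CG g\<close> by simp
      then show ?thesis unfolding extT_def restr_def by simp
    qed
  next
    case False
    then have "x \<notin> CG (gp s g T)" using CGe by simp
    then show ?thesis unfolding extT_def restr_def using False gT_props(1)[OF T, of x] by simp
  qed
qed

lemma B_sub: "UpR (fst s) (cnt s) g' g \<Longrightarrow> CG g' \<subseteq> CG g"
  by (rule CG_mono) (rule UpR_le)

lemma B_in:
  assumes u: "UpR (fst s) (cnt s) g' g" and T': "T' \<in> gT g' (S - {s}) cnt"
  shows "extT s g g' T' \<in> gT g S cnt"
proof -
  let ?T = "extT s g g' T'"
  have P1: "\<And>x. x \<notin> CG g' \<Longrightarrow> T' x = (0, 0)" and P2: "\<And>x. x \<in> CG g' \<Longrightarrow> prod.swap (T' x) \<in> S - {s}"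
    and P3: "\<And>t. t \<in> S - {s} \<Longrightarrow> card {x \<in> CG g'. prod.swap (T' x) = t} = cnt t" and P4: "ssG g' T'"
    using T' unfolding gT_def by auto
  have sub: "CG g' \<subseteq> CG g" using B_sub[OF u] .
  have shg': "shape g'" using shape_pred[OF u shg] .
  have e1: "\<And>x. x \<in> CG g' \<Longrightarrow> ?T x = T' x" unfolding extT_def by simp
  have e2: "\<And>x. x \<notin> CG g' \<Longrightarrow> x \<in> CG g \<Longrightarrow> ?T x = prod.swap s" unfolding extT_def by simp
  have le_s: "\<And>x. x \<in> CG g \<Longrightarrow> prod.swap (?T x) \<le> s"
  proof -
    fix x assume x: "x \<in> CG g"
    show "prod.swap (?T x) \<le> s"
    proof (cases "x \<in> CG g'")
      case True then show ?thesis using e1 P2 smax by auto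
    next
      case False then show ?thesis using e2 x by simp
    qed
  qed
  have 1: "\<forall>x. x \<notin> CG g \<longrightarrow> ?T x = (0, 0)" using sub unfolding extT_def by auto
  have 2: "\<forall>x\<in>CG g. prod.swap (?T x) \<in> S"
  proof
    fix x assume x: "x \<in> CG g"
    show "prod.swap (?T x) \<in> S"
    proof (cases "x \<in> CG g'")
      case True then show ?thesis using e1 P2 by auto
    next
      case False then show ?thesis using e2 x sS by simp
    qed
  qed
  have 3: "\<forall>t\<in>S. card {x \<in> CG g. prod.swap (?T x) = t} = cnt t"
  proof
    fix t assume t: "t \<in> S"
    show "card {x \<in> CG g. prod.swap (?T x) = t} = cnt t"
    proof (cases "t = s")
      case True
      have "{x \<in> CG g. prod.swap (?T x) = t} = CG g - CG g'"
      proof (intro set_eqI iffI)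
        fix x assume "x \<in> {x \<in> CG g. prod.swap (?T x) = t}"
        then have x: "x \<in> CG g" "prod.swap (?T x) = s" using True by auto
        have "x \<notin> CG g'"
        proof
          assume xg: "x \<in> CG g'"
          then have "prod.swap (T' x) = s" using e1[OF xg] x(2) by simp
          moreover have "prod.swap (T' x) \<in> S - {s}" using P2[OF xg] .
          ultimately show False by simp
        qed
        then show "x \<in> CG g - CG g'" using x by simp
      next
        fix x assume "x \<in> CG g - CG g'"
        then show "x \<in> {x \<in> CG g. prod.swap (?T x) = t}" using e2 True by simp
      qed
      moreover have "card (CG g - CG g') = card (CG g) - card (CG g')"
        using sub finite_CG[OF Vg] by (intro card_Diff_subset) (auto intro: finite_subset)
      moreover have "msz g = msz g' + cnt s" using u unfolding UpR_def by simp
      ultimately show ?thesis using True unfolding msz_def by simp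
    next
      case False
      have "{x \<in> CG g. prod.swap (?T x) = t} = {x \<in> CG g'. prod.swap (T' x) = t}"
      proof (intro set_eqI iffI)
        fix x assume a: "x \<in> {x \<in> CG g. prod.swap (?T x) = t}"
        have "x \<in> CG g'"
        proof (rule ccontr)
          assume xn: "x \<notin> CG g'"
          have xg: "x \<in> CG g" using a by simp
          have "prod.swap (?T x) = s" using e2[OF xn xg] by simp
          then show False using a False by simp
        qed
        then show "x \<in> {x \<in> CG g'. prod.swap (T' x) = t}" using a e1 by simp
      next
        fix x assume "x \<in> {x \<in> CG g'. prod.swap (T' x) = t}"
        then show "x \<in> {x \<in> CG g. prod.swap (?T x) = t}" using e1 sub by auto
      qed
      then show ?thesis using P3 t False by simp
    qed
  qed
  have 4: "ssG g ?T"
    unfolding ssG_def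
  proof (intro conjI allI impI)
    fix j r c assume a: "(j, r, c) \<in> CG g \<and> (j, r, Suc c) \<in> CG g"
    show "sym_le (?T (j, r, c)) (?T (j, r, Suc c))"
    proof (cases "(j, r, Suc c) \<in> CG g'")
      case True
      then have "(j, r, c) \<in> CG g'" using a CG_left[OF True, of c] by (simp add: CG_iff)
      then show ?thesis using True P4 e1 unfolding ssG_def by simp
    next
      case False
      then have "?T (j, r, Suc c) = prod.swap s" using e2 a by simp
      then show ?thesis unfolding sym_le_swap using le_s a by simp
    qed
  next
    fix j r c assume a: "(j, r, c) \<in> CG g \<and> (j, Suc r, c) \<in> CG g"
    have r1: "1 \<le> r" "1 \<le> c" using a by (auto simp: CG_iff)
    show "sym_less (?T (j, r, c)) (?T (j, Suc r, c))"
    proof (cases "(j, Suc r, c) \<in> CG g'")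
      case True
      obtain r' where r': "r = Suc r'" using r1 by (cases r) auto
      have "g' j r \<le> g' j (r - 1)" using shg' unfolding shape_def r' by simp
      then have "(j, r, c) \<in> CG g'" using True r1 by (auto simp: CG_iff)
      then show ?thesis using True P4 e1 unfolding ssG_def by simp
    next
      case False
      then have top: "?T (j, Suc r, c) = prod.swap s" using e2 a by simp
      have "(j, r, c) \<in> CG g'"
      proof (cases "1 \<le> j \<and> j \<le> fst s")
        case True
        then have "hs (g' j) (g j)" using u unfolding UpR_def by simp
        then have "g j (Suc (r - 1)) \<le> g' j (r - 1)" unfolding hs_def by blast
        moreover have "c \<le> g j r" using a by (simp add: CG_iff)
        ultimately show ?thesis using r1 by (simp add: CG_iff)
      next
        case jF: False
        then have "g j = g' j" using u unfolding UpR_def by simp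
        then have "(j, Suc r, c) \<in> CG g'" using a unfolding CG_iff by simp
        then show ?thesis using False by simp
      qed
      then have "prod.swap (?T (j, r, c)) \<in> S - {s}" using e1 P2 by simp
      then have "prod.swap (?T (j, r, c)) < s" using smax by (simp add: order.strict_iff_order)
      then show ?thesis unfolding sym_less_swap using top by simp
    qed
  next
    fix j r c assume a: "(j, r, c) \<in> CG g"
    show "j \<le> snd (?T (j, r, c))"
    proof (cases "(j, r, c) \<in> CG g'")
      case True then show ?thesis using P4 e1 unfolding ssG_def by simp
    next
      case False
      have "1 \<le> j \<and> j \<le> fst s"
      proof (rule ccontr)
        assume "\<not> (1 \<le> j \<and> j \<le> fst s)"
        then have "g j = g' j" using u unfolding UpR_def by simp
        then show False using a False unfolding CG_iff by simp
      qed
      then show ?thesis using e2[OF False a] by (simp add: prod.swap_def)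
    qed
  qed
  show ?thesis unfolding gT_def using 1 2 3 4 by blast
qed

lemma B_gp:
  assumes u: "UpR (fst s) (cnt s) g' g" and T': "T' \<in> gT g' (S - {s}) cnt"
  shows "gp s g (extT s g g' T') = g'"
proof (intro ext)
  fix j r
  have P2: "\<And>x. x \<in> CG g' \<Longrightarrow> prod.swap (T' x) \<in> S - {s}" using T' unfolding gT_def by auto
  have le: "g' j r \<le> g j r" using UpR_le[OF u] .
  have "{c \<in> {1..g j r}. prod.swap (extT s g g' T' (j, Suc r, c)) \<noteq> s} = {1..g' j r}"
  proof (intro set_eqI iffI)
    fix c assume c: "c \<in> {c \<in> {1..g j r}. prod.swap (extT s g g' T' (j, Suc r, c)) \<noteq> s}"
    show "c \<in> {1..g' j r}"
    proof (rule ccontr)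
      assume "c \<notin> {1..g' j r}"
      then have "(j, Suc r, c) \<notin> CG g'" "(j, Suc r, c) \<in> CG g" using c by (auto simp: CG_iff)
      then show False using c unfolding extT_def by simp
    qed
  next
    fix c assume c: "c \<in> {1..g' j r}"
    then have "(j, Suc r, c) \<in> CG g'" by (simp add: CG_iff)
    then show "c \<in> {c \<in> {1..g j r}. prod.swap (extT s g g' T' (j, Suc r, c)) \<noteq> s}"
      using c le P2 unfolding extT_def by auto
  qed
  then show "gp s g (extT s g g' T') j r = g' j r" unfolding gp_def by simp
qed

lemma B_restr:
  assumes u: "UpR (fst s) (cnt s) g' g" and T': "T' \<in> gT g' (S - {s}) cnt"
  shows "restr (gp s g (extT s g g' T')) (extT s g g' T') = T'"
proof (intro ext)
  fix x
  have P1: "\<And>x. x \<notin> CG g' \<Longrightarrow> T' x = (0, 0)" using T' unfolding gT_def by auto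
  have "gp s g (extT s g g' T') = g'" by (rule B_gp[OF u T'])
  then have "restr (gp s g (extT s g g' T')) (extT s g g' T') x = restr g' (extT s g g' T') x" by simp
  also have "\<dots> = T' x" unfolding restr_def extT_def using P1 by simp
  finally show "restr (gp s g (extT s g g' T')) (extT s g g' T') x = T' x" .
qed

lemma peel:
  "card (gT g S cnt) = (\<Sum>g'\<in>{g'. UpR (fst s) (cnt s) g' g}. card (gT g' (S - {s}) cnt))"
proof -
  let ?A = "{g'. UpR (fst s) (cnt s) g' g}"
  have "bij_betw (\<lambda>T. (gp s g T, restr (gp s g T) T)) (gT g S cnt) (Sigma ?A (\<lambda>g'. gT g' (S - {s}) cnt))"
  proof (rule bij_betw_byWitness[where f'="\<lambda>(g', T'). extT s g g' T'"])
    show "\<forall>T\<in>gT g S cnt. (\<lambda>(g', T'). extT s g g' T') (gp s g T, restr (gp s g T) T) = T"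
      using L_back by simp
    show "\<forall>z\<in>Sigma ?A (\<lambda>g'. gT g' (S - {s}) cnt). (\<lambda>T. (gp s g T, restr (gp s g T) T)) ((\<lambda>(g', T'). extT s g g' T') z) = z"
    proof
      fix z assume "z \<in> Sigma ?A (\<lambda>g'. gT g' (S - {s}) cnt)"
      then obtain g' T' where z: "z = (g', T')" "UpR (fst s) (cnt s) g' g" "T' \<in> gT g' (S - {s}) cnt" by blast
      show "(\<lambda>T. (gp s g T, restr (gp s g T) T)) ((\<lambda>(g', T'). extT s g g' T') z) = z"
        using B_gp[OF z(2,3)] B_restr[OF z(2,3)] z(1) by simp
    qed
    show "(\<lambda>T. (gp s g T, restr (gp s g T) T)) ` gT g S cnt \<subseteq> Sigma ?A (\<lambda>g'. gT g' (S - {s}) cnt)"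
    proof
      fix z assume "z \<in> (\<lambda>T. (gp s g T, restr (gp s g T) T)) ` gT g S cnt"
      then obtain T where z: "z = (gp s g T, restr (gp s g T) T)" "T \<in> gT g S cnt" by blast
      show "z \<in> Sigma ?A (\<lambda>g'. gT g' (S - {s}) cnt)"
        using L_UpR[OF z(2)] L_restr[OF z(2)] z(1) by simp
    qed
    show "(\<lambda>(g', T'). extT s g g' T') ` Sigma ?A (\<lambda>g'. gT g' (S - {s}) cnt) \<subseteq> gT g S cnt"
    proof
      fix w assume "w \<in> (\<lambda>(g', T'). extT s g g' T') ` Sigma ?A (\<lambda>g'. gT g' (S - {s}) cnt)"
      then obtain z where z: "z \<in> Sigma ?A (\<lambda>g'. gT g' (S - {s}) cnt)" "w = (\<lambda>(g', T'). extT s g g' T') z" by blast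
      then obtain g' T' where w: "w = extT s g g' T'" "UpR (fst s) (cnt s) g' g" "T' \<in> gT g' (S - {s}) cnt"
        by (cases z) auto
      show "w \<in> gT g S cnt" using B_in[OF w(2,3)] w(1) by simp
    qed
  qed
  then have "card (gT g S cnt) = card (Sigma ?A (\<lambda>g'. gT g' (S - {s}) cnt))" by (rule bij_betw_same_card)
  also have "\<dots> = (\<Sum>g'\<in>?A. card (gT g' (S - {s}) cnt))"
  proof (rule card_SigmaI)
    show "finite ?A" by (rule finite_pred)
    show "\<forall>g'\<in>?A. finite (gT g' (S - {s}) cnt)"
    proof
      fix g' assume "g' \<in> ?A"
      then have "VV g'" using UpR_VV by blast
      then show "finite (gT g' (S - {s}) cnt)" using fS by (intro finite_gT) auto
    qed
  qed
  finally show ?thesis .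
qed

end


lemma sorted_Max:
  fixes S :: "'a::linorder set"
  assumes "finite S" "S \<noteq> {}"
  shows "sorted_list_of_set S = sorted_list_of_set (S - {Max S}) @ [Max S]"
proof -
  let ?m = "Max S"
  let ?L = "sorted_list_of_set (S - {?m}) @ [?m]"
  have mS: "?m \<in> S" using assms by simp
  have f: "finite (S - {?m})" using assms by simp
  have "sorted_wrt (<) ?L"
  proof -
    have "sorted_wrt (<) (sorted_list_of_set (S - {?m}))" using f by simp
    moreover have "\<forall>x\<in>S - {?m}. x < ?m" using assms by (auto simp: order.strict_iff_order)
    ultimately show ?thesis using f by (simp add: sorted_wrt_append)
  qed
  moreover have "set ?L = S" using f mS by auto
  moreover have "length ?L = card S"
  proof -
    have "card S > 0" using assms card_gt_0_iff by blast
    then show ?thesis using f mS assms by (simp add: card_Suc_Diff1)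
  qed
  ultimately show ?thesis using sorted_list_of_set_unique[OF assms(1)] by blast
qed

definition upsS :: "(nat \<times> nat) set \<Rightarrow> (nat \<times> nat \<Rightarrow> nat) \<Rightarrow> opr list" where
  "upsS S cnt = ups fst cnt (sorted_list_of_set S)"

definition dnsS :: "(nat \<times> nat) set \<Rightarrow> (nat \<times> nat \<Rightarrow> nat) \<Rightarrow> opr list" where
  "dnsS S cnt = dns (map (\<lambda>s. (fst s, cnt s)) (rev (sorted_list_of_set S)))"

lemma gT_empty: "gT g {} cnt = (if g = E0 then {\<lambda>_. (0, 0)} else {})"
proof -
  have cg: "CG g = {} \<longleftrightarrow> g = E0"
  proof
    assume e: "CG g = {}"
    show "g = E0"
    proof (intro ext)
      fix j r
      show "g j r = E0 j r"
      proof (rule ccontr)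
        assume "g j r \<noteq> E0 j r"
        then have "(j, Suc r, 1) \<in> CG g" unfolding E0_def CG_iff by simp
        then show False using e by simp
      qed
    qed
  next
    assume "g = E0" then show "CG g = {}" unfolding E0_def CG_def by auto
  qed
  show ?thesis
  proof (cases "g = E0")
    case True
    then have c: "CG g = {}" using cg by simp
    have "gT g {} cnt = {\<lambda>_. (0, 0)}"
    proof (intro set_eqI iffI)
      fix T assume "T \<in> gT g {} cnt"
      then have "\<forall>x. T x = (0, 0)" using c unfolding gT_def by simp
      then show "T \<in> {\<lambda>_. (0, 0)}" by auto
    next
      fix T :: "nat \<times> nat \<times> nat \<Rightarrow> nat \<times> nat" assume "T \<in> {\<lambda>_. (0, 0)}"
      then show "T \<in> gT g {} cnt" using c unfolding gT_def ssG_def by simp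
    qed
    then show ?thesis using True by simp
  next
    case False
    then obtain x where x: "x \<in> CG g" using cg by blast
    have "gT g {} cnt = {}"
    proof (intro equals0I)
      fix T assume "T \<in> gT g {} cnt"
      then have "\<forall>x\<in>CG g. prod.swap (T x) \<in> {}" unfolding gT_def by blast
      then show False using x by blast
    qed
    then show ?thesis using False by simp
  qed
qed

lemma card_gT_empty: "card (gT g {} cnt) = (if g = E0 then 1 else 0)"
  by (simp add: gT_empty)

lemma Kdn:
  assumes "VV g" "shape g" "finite S" "\<forall>t\<in>S. 1 \<le> fst t"
  shows "card (gT g S cnt) = paths g (dnsS S cnt) E0"
  using assms
proof (induction "card S" arbitrary: S g rule: less_induct)
  case less
  show ?case
  proof (cases "S = {}")
    case True
    then show ?thesis by (simp add: card_gT_empty dnsS_def dns_def)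
  next
    case False
    let ?s = "Max S"
    have sS: "?s \<in> S" using less.prems(3) False by simp
    have smax: "\<forall>t\<in>S. t \<le> ?s" using less.prems(3) by simp
    have lev: "1 \<le> fst ?s" using less.prems(4) sS by blast
    have ds: "dnsS S cnt = D (fst ?s) (cnt ?s) # dnsS (S - {?s}) cnt"
      unfolding dnsS_def dns_def using sorted_Max[OF less.prems(3) False] by simp
    have "paths g (dnsS S cnt) E0 = (\<Sum>g'\<in>{g'. UpR (fst ?s) (cnt ?s) g' g}. paths g' (dnsS (S - {?s}) cnt) E0)"
      unfolding ds by simp
    also have "\<dots> = (\<Sum>g'\<in>{g'. UpR (fst ?s) (cnt ?s) g' g}. card (gT g' (S - {?s}) cnt))"
    proof (rule sum.cong[OF refl])
      fix g' assume "g' \<in> {g'. UpR (fst ?s) (cnt ?s) g' g}"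
      then have u: "UpR (fst ?s) (cnt ?s) g' g" by simp
      have "card (S - {?s}) < card S" by (rule card_Diff1_less[OF less.prems(3) sS])
      moreover have "VV g'" using UpR_VV[OF u] by simp
      moreover have "shape g'" using shape_pred[OF u less.prems(2)] .
      ultimately show "paths g' (dnsS (S - {?s}) cnt) E0 = card (gT g' (S - {?s}) cnt)"
        using less.hyps[of "S - {?s}" g'] less.prems(3,4) by simp
    qed
    also have "\<dots> = card (gT g S cnt)"
      using peel[OF less.prems(1,2,3) sS smax lev] by simp
    finally show ?thesis by simp
  qed
qed

lemma Kup:
  assumes "VV g" "shape g" "finite S" "\<forall>t\<in>S. 1 \<le> fst t"
  shows "card (gT g S cnt) = paths E0 (upsS S cnt) g"
  using assms
proof (induction "card S" arbitrary: S g rule: less_induct)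
  case less
  show ?case
  proof (cases "S = {}")
    case True
    then show ?thesis by (auto simp: card_gT_empty upsS_def ups_def)
  next
    case False
    let ?s = "Max S"
    let ?xs = "upsS (S - {?s}) cnt"
    let ?P = "{z. UpR (fst ?s) (cnt ?s) z g}"
    have sS: "?s \<in> S" using less.prems(3) False by simp
    have smax: "\<forall>t\<in>S. t \<le> ?s" using less.prems(3) by simp
    have lev: "1 \<le> fst ?s" using less.prems(4) sS by blast
    have us: "upsS S cnt = ?xs @ [U (fst ?s) (cnt ?s)]"
      unfolding upsS_def ups_def using sorted_Max[OF less.prems(3) False] by simp
    define T where "T = {z. paths E0 ?xs z \<noteq> 0} \<union> ?P"
    have fT: "finite T" unfolding T_def using finite_reach finite_pred by blast
    have one: "paths z [U (fst ?s) (cnt ?s)] g = (if UpR (fst ?s) (cnt ?s) z g then 1 else 0)" for z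
      using finite_succ[of "fst ?s" "cnt ?s" z] by (simp add: sum.delta')
    have "paths E0 (upsS S cnt) g = (\<Sum>z\<in>T. paths E0 ?xs z * paths z [U (fst ?s) (cnt ?s)] g)"
      unfolding us by (rule paths_append[OF fT]) (auto simp: T_def)
    also have "\<dots> = (\<Sum>z\<in>T. if z \<in> ?P then paths E0 ?xs z else 0)"
      by (intro sum.cong refl) (simp only: one mem_Collect_eq, simp)
    also have "\<dots> = (\<Sum>z\<in>?P. paths E0 ?xs z)"
      using fT by (simp add: sum.If_cases Int_absorb1 T_def)
    also have "\<dots> = (\<Sum>z\<in>?P. card (gT z (S - {?s}) cnt))"
    proof (rule sum.cong[OF refl])
      fix z assume "z \<in> ?P"
      then have u: "UpR (fst ?s) (cnt ?s) z g" by simp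
      have "card (S - {?s}) < card S" by (rule card_Diff1_less[OF less.prems(3) sS])
      moreover have "VV z" using UpR_VV[OF u] by simp
      moreover have "shape z" using shape_pred[OF u less.prems(2)] .
      ultimately show "paths E0 ?xs z = card (gT z (S - {?s}) cnt)"
        using less.hyps[of "S - {?s}" z] less.prems(3,4) by simp
    qed
    also have "\<dots> = card (gT g S cnt)"
      using peel[OF less.prems(1,2,3) sS smax lev] by simp
    finally show ?thesis by simp
  qed
qed


definition Parts :: "nat \<Rightarrow> nat \<Rightarrow> nat list set" where
  "Parts n a = {eta. is_partition eta \<and> (\<forall>x\<in>set eta. x \<le> a) \<and> length eta \<le> n}"

lemma is_partition_Cons: "is_partition (t # eta) \<longleftrightarrow> 0 < t \<and> (\<forall>x\<in>set eta. x \<le> t) \<and> is_partition eta"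
  unfolding is_partition_def by auto

lemma Parts_0: "Parts 0 a = {[]}"
  unfolding Parts_def is_partition_def by auto

lemma Parts_zero: "Parts n 0 = {[]}"
proof (intro set_eqI iffI)
  fix eta assume "eta \<in> Parts n 0"
  then show "eta \<in> {[]}" unfolding Parts_def is_partition_def by (cases eta) auto
next
  fix eta :: "nat list" assume "eta \<in> {[]}" then show "eta \<in> Parts n 0" unfolding Parts_def is_partition_def by simp
qed

lemma finite_Parts: "finite (Parts n a)"
proof -
  have "Parts n a \<subseteq> {xs. set xs \<subseteq> {..a} \<and> length xs \<le> n}" unfolding Parts_def by auto
  moreover have "finite {xs. set xs \<subseteq> {..a} \<and> length xs \<le> n}" by (rule finite_lists_length_le) simp
  ultimately show ?thesis by (rule finite_subset)
qed

lemma Parts_Suc: "Parts (Suc n) k = insert [] (\<Union>t\<in>{1..k}. (Cons t) ` Parts n t)"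
proof (intro set_eqI iffI)
  fix eta assume e: "eta \<in> Parts (Suc n) k"
  show "eta \<in> insert [] (\<Union>t\<in>{1..k}. (Cons t) ` Parts n t)"
  proof (cases eta)
    case Nil then show ?thesis by simp
  next
    case (Cons t eta')
    have "t # eta' \<in> Parts (Suc n) k" using e Cons by simp
    then have "eta' \<in> Parts n t" "t \<in> {1..k}" by (auto simp: Parts_def is_partition_Cons)
    then show ?thesis using Cons by blast
  qed
next
  fix eta assume "eta \<in> insert [] (\<Union>t\<in>{1..k}. (Cons t) ` Parts n t)"
  then show "eta \<in> Parts (Suc n) k"
    by (auto simp: Parts_def is_partition_Cons) (auto simp: is_partition_def)
qed

lemma card_Parts_Suc: "card (Parts (Suc n) k) = (\<Sum>t\<le>k. card (Parts n t))"
proof -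
  have "card (Parts (Suc n) k) = Suc (card (\<Union>t\<in>{1..k}. (Cons t) ` Parts n t))"
    unfolding Parts_Suc by (subst card_insert_disjoint) (auto simp: finite_Parts)
  also have "card (\<Union>t\<in>{1..k}. (Cons t) ` Parts n t) = (\<Sum>t\<in>{1..k}. card ((Cons t) ` Parts n t))"
    by (rule card_UN_disjoint) (auto simp: finite_Parts)
  also have "\<dots> = (\<Sum>t\<in>{1..k}. card (Parts n t))"
    by (intro sum.cong refl card_image) (auto simp: inj_on_def)
  finally have a: "card (Parts (Suc n) k) = Suc (\<Sum>t\<in>{1..k}. card (Parts n t))" .
  have "(\<Sum>t\<le>k. card (Parts n t)) = card (Parts n 0) + (\<Sum>t\<in>{1..k}. card (Parts n t))"
  proof -
    have "{..k} = insert 0 {1..k}" by auto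
    then show ?thesis by simp
  qed
  then show ?thesis using a by (simp add: Parts_zero)
qed

lemma KVset_1: "KVset 1 k = {(\<lambda>_. 0)(1 := k)}"
proof (intro set_eqI iffI)
  fix kv assume "kv \<in> KVset 1 k"
  then have "\<forall>j. j \<noteq> 1 \<longrightarrow> kv j = 0" "kv 1 = k" unfolding KVset_def by auto
  then have "kv = (\<lambda>_. 0)(1 := k)" by (intro ext) auto
  then show "kv \<in> {(\<lambda>_. 0)(1 := k)}" by simp
next
  fix kv :: "nat \<Rightarrow> nat" assume "kv \<in> {(\<lambda>_. 0 :: nat)(1 := k)}"
  then show "kv \<in> KVset 1 k" unfolding KVset_def by auto
qed

lemma card_KVset_Suc:
  assumes "1 \<le> r"
  shows "card (KVset (Suc r) k) = (\<Sum>k'\<le>k. card (KVset r k'))"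
proof -
  have "bij_betw (\<lambda>kv. kv(Suc r := 0)) (KVset (Suc r) k) (\<Union>k'\<in>{..k}. KVset r k')"
  proof (rule bij_betw_byWitness[where f'="\<lambda>kv'. kv'(Suc r := k - (\<Sum>j\<in>{1..r}. kv' j))"])
    show "\<forall>kv\<in>KVset (Suc r) k. (kv(Suc r := 0))(Suc r := k - (\<Sum>j\<in>{1..r}. (kv(Suc r := 0)) j)) = kv"
    proof
      fix kv assume "kv \<in> KVset (Suc r) k"
      then have s: "(\<Sum>j\<in>{1..Suc r}. kv j) = k" unfolding KVset_def by simp
      have s2: "(\<Sum>j\<in>{1..r}. (kv(Suc r := 0)) j) = (\<Sum>j\<in>{1..r}. kv j)" by (intro sum.cong) auto
      have "(\<Sum>j\<in>{1..Suc r}. kv j) = (\<Sum>j\<in>{1..r}. kv j) + kv (Suc r)" by simp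
      then show "(kv(Suc r := 0))(Suc r := k - (\<Sum>j\<in>{1..r}. (kv(Suc r := 0)) j)) = kv"
        using s s2 by (intro ext) auto
    qed
    show "\<forall>kv'\<in>(\<Union>k'\<in>{..k}. KVset r k'). (kv'(Suc r := k - (\<Sum>j\<in>{1..r}. kv' j)))(Suc r := 0) = kv'"
      unfolding KVset_def by (auto intro!: ext)
    show "(\<lambda>kv. kv(Suc r := 0)) ` KVset (Suc r) k \<subseteq> (\<Union>k'\<in>{..k}. KVset r k')"
    proof
      fix kv' assume "kv' \<in> (\<lambda>kv. kv(Suc r := 0)) ` KVset (Suc r) k"
      then obtain kv where kv: "kv' = kv(Suc r := 0)" "kv \<in> KVset (Suc r) k" by blast
      have s: "(\<Sum>j\<in>{1..Suc r}. kv j) = k" "\<forall>j. \<not> (1 \<le> j \<and> j \<le> Suc r) \<longrightarrow> kv j = 0"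
        using kv(2) unfolding KVset_def by auto
      have s2: "(\<Sum>j\<in>{1..r}. kv' j) = (\<Sum>j\<in>{1..r}. kv j)" unfolding kv(1) by (intro sum.cong) auto
      have "(\<Sum>j\<in>{1..Suc r}. kv j) = (\<Sum>j\<in>{1..r}. kv j) + kv (Suc r)" by simp
      then have le: "(\<Sum>j\<in>{1..r}. kv' j) \<le> k" using s s2 by simp
      have "\<forall>j. \<not> (1 \<le> j \<and> j \<le> r) \<longrightarrow> kv' j = 0" using s(2) unfolding kv(1) by auto
      then have "kv' \<in> KVset r (\<Sum>j\<in>{1..r}. kv' j)" unfolding KVset_def by simp
      then show "kv' \<in> (\<Union>k'\<in>{..k}. KVset r k')" using le by blast
    qed
    show "(\<lambda>kv'. kv'(Suc r := k - (\<Sum>j\<in>{1..r}. kv' j))) ` (\<Union>k'\<in>{..k}. KVset r k') \<subseteq> KVset (Suc r) k"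
    proof
      fix kv assume "kv \<in> (\<lambda>kv'. kv'(Suc r := k - (\<Sum>j\<in>{1..r}. kv' j))) ` (\<Union>k'\<in>{..k}. KVset r k')"
      then obtain kv' k' where kv: "kv = kv'(Suc r := k - (\<Sum>j\<in>{1..r}. kv' j))" "k' \<le> k" "kv' \<in> KVset r k'" by blast
      have s: "(\<Sum>j\<in>{1..r}. kv' j) = k'" "\<forall>j. \<not> (1 \<le> j \<and> j \<le> r) \<longrightarrow> kv' j = 0"
        using kv(3) unfolding KVset_def by auto
      have s2: "(\<Sum>j\<in>{1..r}. kv j) = (\<Sum>j\<in>{1..r}. kv' j)" unfolding kv(1) by (intro sum.cong) auto
      have "(\<Sum>j\<in>{1..Suc r}. kv j) = (\<Sum>j\<in>{1..r}. kv j) + kv (Suc r)" by simp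
      then have "(\<Sum>j\<in>{1..Suc r}. kv j) = k" using s s2 kv(1,2) by simp
      moreover have "\<forall>j. \<not> (1 \<le> j \<and> j \<le> Suc r) \<longrightarrow> kv j = 0" using s(2) unfolding kv(1) by auto
      ultimately show "kv \<in> KVset (Suc r) k" unfolding KVset_def by simp
    qed
  qed
  then have "card (KVset (Suc r) k) = card (\<Union>k'\<in>{..k}. KVset r k')" by (rule bij_betw_same_card)
  also have "\<dots> = (\<Sum>k'\<le>k. card (KVset r k'))"
  proof (rule card_UN_disjoint)
    show "finite {..k}" by simp
    show "\<forall>k'\<in>{..k}. finite (KVset r k')" using finite_KVset by blast
    show "\<forall>i\<in>{..k}. \<forall>j\<in>{..k}. i \<noteq> j \<longrightarrow> KVset r i \<inter> KVset r j = {}" unfolding KVset_def by auto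
  qed
  finally show ?thesis .
qed

lemma W_Parts: "1 \<le> r \<Longrightarrow> W r k = card (Parts (r - 1) k)"
proof (induction r arbitrary: k rule: nat_induct_at_least)
  case base
  show ?case using KVset_1[of k] Parts_0[of k] unfolding W_def by simp
next
  case (Suc r)
  then show ?case using card_KVset_Suc[OF Suc.hyps(1)] card_Parts_Suc[of "r - 1"] Suc.hyps(1)
    by (simp add: W_def)
qed


type_synonym pm = "(nat \<times> nat \<Rightarrow> nat \<times> nat \<Rightarrow> nat) \<times> (nat \<times> nat \<Rightarrow> nat \<times> nat \<Rightarrow> nat list)"

definition PMg :: "(nat \<times> nat) set \<Rightarrow> (nat \<times> nat) set \<Rightarrow> (nat \<times> nat \<Rightarrow> nat) \<Rightarrow> (nat \<times> nat \<Rightarrow> nat) \<Rightarrow> pm set" where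
  "PMg R C rs cs = {(A, P).
     (\<forall>r c. (r, c) \<notin> R \<times> C \<longrightarrow> A r c = 0 \<and> P r c = []) \<and>
     (\<forall>r\<in>R. (\<Sum>c\<in>C. A r c) = rs r) \<and>
     (\<forall>c\<in>C. (\<Sum>r\<in>R. A r c) = cs c) \<and>
     (\<forall>r\<in>R. \<forall>c\<in>C. P r c \<in> Parts (min (fst r) (fst c) - 1) (A r c))}"

definition Qset :: "nat \<times> nat \<Rightarrow> (nat \<times> nat) set \<Rightarrow> (nat \<times> nat \<Rightarrow> nat) \<Rightarrow> (nat \<times> nat \<Rightarrow> nat list) set" where
  "Qset r0 C v = {Q. (\<forall>c. c \<notin> C \<longrightarrow> Q c = []) \<and> (\<forall>c\<in>C. Q c \<in> Parts (min (fst r0) (fst c) - 1) (v c))}"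

lemma card_funs:
  assumes "finite C"
  shows "card {Q :: 'a \<Rightarrow> 'b. (\<forall>c. c \<notin> C \<longrightarrow> Q c = d) \<and> (\<forall>c\<in>C. Q c \<in> F c)} = (\<Prod>c\<in>C. card (F c))"
proof -
  let ?Q = "{Q :: 'a \<Rightarrow> 'b. (\<forall>c. c \<notin> C \<longrightarrow> Q c = d) \<and> (\<forall>c\<in>C. Q c \<in> F c)}"
  have "bij_betw (\<lambda>Q. restrict Q C) ?Q (PiE C F)"
  proof (rule bij_betw_byWitness[where f'="\<lambda>f c. if c \<in> C then f c else d"])
    show "\<forall>Q\<in>?Q. (\<lambda>c. if c \<in> C then restrict Q C c else d) = Q" by (auto intro!: ext)
    show "\<forall>f\<in>PiE C F. restrict (\<lambda>c. if c \<in> C then f c else d) C = f"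
      by (auto intro!: ext simp: PiE_iff extensional_def)
    show "(\<lambda>Q. restrict Q C) ` ?Q \<subseteq> PiE C F" by (auto simp: PiE_iff)
    show "(\<lambda>f c. if c \<in> C then f c else d) ` PiE C F \<subseteq> ?Q" by (auto simp: PiE_iff)
  qed
  then have "card ?Q = card (PiE C F)" by (rule bij_betw_same_card)
  also have "\<dots> = (\<Prod>c\<in>C. card (F c))" using assms by (rule card_PiE)
  finally show ?thesis .
qed

lemma card_Qset: "finite C \<Longrightarrow> card (Qset r0 C v) = (\<Prod>c\<in>C. card (Parts (min (fst r0) (fst c) - 1) (v c)))"
  unfolding Qset_def by (rule card_funs)

lemma finite_Qset: "finite C \<Longrightarrow> finite (Qset r0 C v)"
proof -
  assume fC: "finite C"
  have "Qset r0 C v \<subseteq> {Q. (\<forall>c. c \<notin> C \<longrightarrow> Q c = (\<lambda>_. []) c) \<and> (\<forall>c\<in>C. Q c \<in> (\<Union>c\<in>C. Parts (min (fst r0) (fst c) - 1) (v c)))}"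
    unfolding Qset_def by auto
  moreover have "finite {Q. (\<forall>c. c \<notin> C \<longrightarrow> Q c = (\<lambda>_. []) c) \<and> (\<forall>c\<in>C. Q c \<in> (\<Union>c\<in>C. Parts (min (fst r0) (fst c) - 1) (v c)))}"
    using fC by (intro fin_funs) (auto simp: finite_Parts)
  ultimately show ?thesis by (rule finite_subset)
qed

definition Vrow :: "(nat \<times> nat) list \<Rightarrow> (nat \<times> nat \<Rightarrow> nat) \<Rightarrow> nat \<Rightarrow> (nat \<times> nat \<Rightarrow> nat) set" where
  "Vrow X cs a = {v \<in> KV X cs a. (\<Sum>c\<in>set X. v c) = a}"

lemma PM_row_bij:
  assumes r0: "r0 \<notin> R" and fR: "finite R" and fC: "finite (set X)"
  shows "bij_betw (\<lambda>(A, P). (A r0, (P r0, (A(r0 := (\<lambda>_. 0)), P(r0 := (\<lambda>_. []))))))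
     (PMg (insert r0 R) (set X) rs cs)
     (SIGMA v:Vrow X cs (rs r0). Qset r0 (set X) v \<times> PMg R (set X) rs (\<lambda>c. cs c - v c))"
proof (rule bij_betw_byWitness[where f'="\<lambda>(v, (Q, (A', P'))). (A'(r0 := v), P'(r0 := Q))"])
  let ?C = "set X"
  show "\<forall>z\<in>PMg (insert r0 R) ?C rs cs. (\<lambda>(v, (Q, (A', P'))). (A'(r0 := v), P'(r0 := Q)))
      ((\<lambda>(A, P). (A r0, (P r0, (A(r0 := (\<lambda>_. 0)), P(r0 := (\<lambda>_. [])))))) z) = z"
    by auto
  show "\<forall>z\<in>(SIGMA v:Vrow X cs (rs r0). Qset r0 ?C v \<times> PMg R ?C rs (\<lambda>c. cs c - v c)).
      (\<lambda>(A, P). (A r0, (P r0, (A(r0 := (\<lambda>_. 0)), P(r0 := (\<lambda>_. []))))))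
      ((\<lambda>(v, (Q, (A', P'))). (A'(r0 := v), P'(r0 := Q))) z) = z"
  proof
    fix z assume "z \<in> (SIGMA v:Vrow X cs (rs r0). Qset r0 ?C v \<times> PMg R ?C rs (\<lambda>c. cs c - v c))"
    then obtain v Q A' P' where z: "z = (v, (Q, (A', P')))" "(A', P') \<in> PMg R ?C rs (\<lambda>c. cs c - v c)" by auto
    have Z: "\<And>r c. (r, c) \<notin> R \<times> ?C \<Longrightarrow> A' r c = 0 \<and> P' r c = []" using z(2) unfolding PMg_def by auto
    have "\<forall>c. A' r0 c = 0 \<and> P' r0 c = []"
    proof
      fix c have "(r0, c) \<notin> R \<times> ?C" using r0 by simp
      then show "A' r0 c = 0 \<and> P' r0 c = []" using Z by blast
    qed
    then have "A' r0 = (\<lambda>_. 0)" "P' r0 = (\<lambda>_. [])" by auto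
    then show "(\<lambda>(A, P). (A r0, (P r0, (A(r0 := (\<lambda>_. 0)), P(r0 := (\<lambda>_. []))))))
      ((\<lambda>(v, (Q, (A', P'))). (A'(r0 := v), P'(r0 := Q))) z) = z" using z(1) by auto
  qed
  show "(\<lambda>(A, P). (A r0, (P r0, (A(r0 := (\<lambda>_. 0)), P(r0 := (\<lambda>_. [])))))) ` PMg (insert r0 R) ?C rs cs
      \<subseteq> (SIGMA v:Vrow X cs (rs r0). Qset r0 ?C v \<times> PMg R ?C rs (\<lambda>c. cs c - v c))"
  proof
    fix z assume "z \<in> (\<lambda>(A, P). (A r0, (P r0, (A(r0 := (\<lambda>_. 0)), P(r0 := (\<lambda>_. [])))))) ` PMg (insert r0 R) ?C rs cs"
    then obtain A P where z: "z = (A r0, (P r0, (A(r0 := (\<lambda>_. 0)), P(r0 := (\<lambda>_. [])))))"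
      and AP: "(A, P) \<in> PMg (insert r0 R) ?C rs cs" by auto
    have Z: "\<And>r c. (r, c) \<notin> insert r0 R \<times> ?C \<Longrightarrow> A r c = 0 \<and> P r c = []"
      and RS: "\<And>r. r \<in> insert r0 R \<Longrightarrow> (\<Sum>c\<in>?C. A r c) = rs r"
      and CS: "\<And>c. c \<in> ?C \<Longrightarrow> (\<Sum>r\<in>insert r0 R. A r c) = cs c"
      and PP: "\<And>r c. r \<in> insert r0 R \<Longrightarrow> c \<in> ?C \<Longrightarrow> P r c \<in> Parts (min (fst r) (fst c) - 1) (A r c)"
      using AP unfolding PMg_def by auto
    have cs_split: "\<And>c. c \<in> ?C \<Longrightarrow> A r0 c + (\<Sum>r\<in>R. A r c) = cs c" using CS r0 fR by simp
    have v: "A r0 \<in> Vrow X cs (rs r0)"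
      unfolding Vrow_def KV_def
    proof (intro CollectI conjI allI impI)
      fix c assume "c \<notin> ?C" then show "A r0 c = 0" using Z by auto
    next
      fix c show "A r0 c \<le> cs c"
      proof (cases "c \<in> ?C")
        case True then show ?thesis using cs_split by fastforce
      next
        case False then show ?thesis using Z by auto
      qed
    next
      show "(\<Sum>c\<in>?C. A r0 c) \<le> rs r0" using RS by simp
      show "(\<Sum>c\<in>?C. A r0 c) = rs r0" using RS by simp
    qed
    have q: "P r0 \<in> Qset r0 ?C (A r0)" unfolding Qset_def using Z PP by auto
    have p: "(A(r0 := (\<lambda>_. 0)), P(r0 := (\<lambda>_. []))) \<in> PMg R ?C rs (\<lambda>c. cs c - A r0 c)"
      unfolding PMg_def
    proof (intro CollectI case_prodI conjI allI impI ballI)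
      fix r c assume "(r, c) \<notin> R \<times> ?C"
      then show "(A(r0 := (\<lambda>_. 0))) r c = 0" "(P(r0 := (\<lambda>_. []))) r c = []" using Z by auto
    next
      fix r assume "r \<in> R" then show "(\<Sum>c\<in>?C. (A(r0 := (\<lambda>_. 0))) r c) = rs r" using RS r0 by auto
    next
      fix c assume "c \<in> ?C"
      have "(\<Sum>r\<in>R. (A(r0 := (\<lambda>_. 0))) r c) = (\<Sum>r\<in>R. A r c)" using r0 by (intro sum.cong) auto
      then show "(\<Sum>r\<in>R. (A(r0 := (\<lambda>_. 0))) r c) = cs c - A r0 c"
        using cs_split[OF \<open>c \<in> ?C\<close>] by simp
    next
      fix r c assume "r \<in> R" "c \<in> ?C"
      then show "(P(r0 := (\<lambda>_. []))) r c \<in> Parts (min (fst r) (fst c) - 1) ((A(r0 := (\<lambda>_. 0))) r c)"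
        using PP r0 by auto
    qed
    show "z \<in> (SIGMA v:Vrow X cs (rs r0). Qset r0 ?C v \<times> PMg R ?C rs (\<lambda>c. cs c - v c))"
      using v q p z by auto
  qed
  show "(\<lambda>(v, (Q, (A', P'))). (A'(r0 := v), P'(r0 := Q))) ` (SIGMA v:Vrow X cs (rs r0). Qset r0 ?C v \<times> PMg R ?C rs (\<lambda>c. cs c - v c))
      \<subseteq> PMg (insert r0 R) ?C rs cs"
  proof
    fix w assume "w \<in> (\<lambda>(v, (Q, (A', P'))). (A'(r0 := v), P'(r0 := Q))) ` (SIGMA v:Vrow X cs (rs r0). Qset r0 ?C v \<times> PMg R ?C rs (\<lambda>c. cs c - v c))"
    then obtain v Q A' P' where w: "w = (A'(r0 := v), P'(r0 := Q))" and v: "v \<in> Vrow X cs (rs r0)"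
      and Q: "Q \<in> Qset r0 ?C v" and AP: "(A', P') \<in> PMg R ?C rs (\<lambda>c. cs c - v c)" by auto
    have Z: "\<And>r c. (r, c) \<notin> R \<times> ?C \<Longrightarrow> A' r c = 0 \<and> P' r c = []"
      and RS: "\<And>r. r \<in> R \<Longrightarrow> (\<Sum>c\<in>?C. A' r c) = rs r"
      and CS: "\<And>c. c \<in> ?C \<Longrightarrow> (\<Sum>r\<in>R. A' r c) = cs c - v c"
      and PP: "\<And>r c. r \<in> R \<Longrightarrow> c \<in> ?C \<Longrightarrow> P' r c \<in> Parts (min (fst r) (fst c) - 1) (A' r c)"
      using AP unfolding PMg_def by auto
    have v0: "\<And>c. c \<notin> ?C \<Longrightarrow> v c = 0" and vle: "\<And>c. v c \<le> cs c" and vs: "(\<Sum>c\<in>?C. v c) = rs r0"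
      using v unfolding Vrow_def KV_def by auto
    have Q0: "\<And>c. c \<notin> ?C \<Longrightarrow> Q c = []" and QP: "\<And>c. c \<in> ?C \<Longrightarrow> Q c \<in> Parts (min (fst r0) (fst c) - 1) (v c)"
      using Q unfolding Qset_def by auto
    have "(A'(r0 := v), P'(r0 := Q)) \<in> PMg (insert r0 R) ?C rs cs"
      unfolding PMg_def
    proof (intro CollectI case_prodI conjI allI impI ballI)
      fix r c assume a: "(r, c) \<notin> insert r0 R \<times> ?C"
      show "(A'(r0 := v)) r c = 0" using a Z v0 by (cases "r = r0") auto
      show "(P'(r0 := Q)) r c = []" using a Z Q0 by (cases "r = r0") auto
    next
      fix r assume "r \<in> insert r0 R"
      then show "(\<Sum>c\<in>?C. (A'(r0 := v)) r c) = rs r" using RS vs r0 by (cases "r = r0") auto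
    next
      fix c assume c: "c \<in> ?C"
      have "(\<Sum>r\<in>insert r0 R. (A'(r0 := v)) r c) = v c + (\<Sum>r\<in>R. (A'(r0 := v)) r c)" using r0 fR by simp
      also have "(\<Sum>r\<in>R. (A'(r0 := v)) r c) = (\<Sum>r\<in>R. A' r c)" using r0 by (intro sum.cong) auto
      finally show "(\<Sum>r\<in>insert r0 R. (A'(r0 := v)) r c) = cs c" using CS[OF c] vle[of c] by simp
    next
      fix r c assume "r \<in> insert r0 R" "c \<in> ?C"
      then show "(P'(r0 := Q)) r c \<in> Parts (min (fst r) (fst c) - 1) ((A'(r0 := v)) r c)"
        using PP QP r0 by (cases "r = r0") auto
    qed
    then show "w \<in> PMg (insert r0 R) ?C rs cs" using w by simp
  qed
qed

lemma PMg_empty: "PMg {} C rs cs = (if \<forall>c\<in>C. cs c = 0 then {(\<lambda>_ _. 0, \<lambda>_ _. [])} else {})"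
  unfolding PMg_def by (auto intro!: ext)

lemma PM_Mc:
  assumes "distinct rl" "distinct X" "\<forall>c\<in>set X. 1 \<le> fst c" "\<forall>r\<in>set rl. 1 \<le> fst r"
  shows "finite (PMg (set rl) (set X) rs cs) \<and> card (PMg (set rl) (set X) rs cs) = Mc fst X cs (map (\<lambda>r. (fst r, rs r)) rl)"
  using assms
proof (induction rl arbitrary: cs)
  case Nil
  then show ?case by (simp add: PMg_empty)
next
  case (Cons r0 rl)
  have r0: "r0 \<notin> set rl" and d: "distinct rl" using Cons.prems by auto
  have l0: "1 \<le> fst r0" using Cons.prems by simp
  let ?S = "SIGMA v:Vrow X cs (rs r0). Qset r0 (set X) v \<times> PMg (set rl) (set X) rs (\<lambda>c. cs c - v c)"
  have bij: "bij_betw (\<lambda>(A, P). (A r0, (P r0, (A(r0 := (\<lambda>_. 0)), P(r0 := (\<lambda>_. [])))))) (PMg (insert r0 (set rl)) (set X) rs cs) ?S"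
    by (rule PM_row_bij[OF r0]) simp_all
  have IH: "\<And>v. finite (PMg (set rl) (set X) rs (\<lambda>c. cs c - v c)) \<and>
      card (PMg (set rl) (set X) rs (\<lambda>c. cs c - v c)) = Mc fst X (\<lambda>c. cs c - v c) (map (\<lambda>r. (fst r, rs r)) rl)"
    using Cons.IH d Cons.prems by simp
  have fV: "finite (Vrow X cs (rs r0))" unfolding Vrow_def using finite_KV[of X cs "rs r0"] by simp
  have fS: "finite ?S" using fV finite_Qset IH by (intro finite_SigmaI finite_cartesian_product) auto
  have "card ?S = (\<Sum>v\<in>Vrow X cs (rs r0). card (Qset r0 (set X) v \<times> PMg (set rl) (set X) rs (\<lambda>c. cs c - v c)))"
    using fV finite_Qset IH by (intro card_SigmaI) auto
  also have "\<dots> = (\<Sum>v\<in>Vrow X cs (rs r0). wt fst (fst r0) X v * Mc fst X (\<lambda>c. cs c - v c) (map (\<lambda>r. (fst r, rs r)) rl))"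
  proof (rule sum.cong[OF refl])
    fix v
    have "card (Qset r0 (set X) v) = wt fst (fst r0) X v"
      unfolding card_Qset[OF finite_set] wt_def
    proof (rule prod.cong[OF refl])
      fix c assume "c \<in> set X"
      then have "1 \<le> min (fst c) (fst r0)" using Cons.prems(3) l0 by simp
      then show "card (Parts (min (fst r0) (fst c) - 1) (v c)) = W (min (fst c) (fst r0)) (v c)"
        using W_Parts by (simp add: min.commute)
    qed
    then show "card (Qset r0 (set X) v \<times> PMg (set rl) (set X) rs (\<lambda>c. cs c - v c)) =
        wt fst (fst r0) X v * Mc fst X (\<lambda>c. cs c - v c) (map (\<lambda>r. (fst r, rs r)) rl)"
      using IH[of v] by (simp add: card_cartesian_product)
  qed
  also have "\<dots> = Mc fst X cs (map (\<lambda>r. (fst r, rs r)) (r0 # rl))" by (simp add: Vrow_def)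
  finally have "card ?S = Mc fst X cs (map (\<lambda>r. (fst r, rs r)) (r0 # rl))" .
  moreover have "card (PMg (set (r0 # rl)) (set X) rs cs) = card ?S" using bij_betw_same_card[OF bij] by simp
  moreover have "finite (PMg (set (r0 # rl)) (set X) rs cs)" using bij_betw_finite[OF bij] fS by simp
  ultimately show ?case by simp
qed


definition conv :: "nat list list \<Rightarrow> st" where
  "conv la = (\<lambda>j r. if 1 \<le> j \<and> j \<le> length la \<and> r < length (la ! (j - 1)) then la ! (j - 1) ! r else 0)"

lemma Cells_CG: "Cells la = CG (conv la)"
proof (intro set_eqI)
  fix x :: "nat \<times> nat \<times> nat"
  obtain j r c where x: "x = (j, r, c)" by (cases x) auto
  show "x \<in> Cells la \<longleftrightarrow> x \<in> CG (conv la)"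
    unfolding x Cells_def CG_iff conv_def by auto
qed

lemma idx_Sigma: "idx mu = (SIGMA p:{1..length mu}. {1..length (mu ! (p - 1))})"
  unfolding idx_def by auto

lemma finite_idx: "finite (idx mu)"
  unfolding idx_Sigma by auto

lemma idx_lev: "\<forall>t\<in>idx mu. 1 \<le> fst t"
  unfolding idx_def by auto

lemma swap_eq: "prod.swap a = (p, i) \<longleftrightarrow> a = (i, p)"
  by (cases a) auto

lemma SST_gT: "SST la mu = gT (conv la) (idx mu) (case_prod (ent mu))"
proof (intro set_eqI)
  fix T
  let ?g = "conv la"
  have t1: "(\<forall>x\<in>CG ?g. (snd (T x), fst (T x)) \<in> idx mu) \<longleftrightarrow> (\<forall>x\<in>CG ?g. prod.swap (T x) \<in> idx mu)"
    by (simp add: prod.swap_def)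
  have t2: "(\<forall>(p, i)\<in>idx mu. card {x \<in> CG ?g. T x = (i, p)} = ent mu p i) \<longleftrightarrow>
      (\<forall>s\<in>idx mu. card {x \<in> CG ?g. prod.swap (T x) = s} = case_prod (ent mu) s)"
    by (simp add: swap_eq Ball_def split_paired_All)
  show "T \<in> SST la mu \<longleftrightarrow> T \<in> gT ?g (idx mu) (case_prod (ent mu))"
    unfolding SST_def gT_def tableau_def mem_Collect_eq Cells_CG t1 t2
    unfolding semistandard_def ssG_def Cells_CG by (simp only: conj_assoc)
qed

lemma VV_conv: "VV (conv la)"
proof -
  have "{(j, r). conv la j r \<noteq> 0} \<subseteq> (SIGMA j:{1..length la}. {..<length (la ! (j - 1))})"
    unfolding conv_def by (auto split: if_splits)
  moreover have "finite (SIGMA j:{1..length la}. {..<length (la ! (j - 1))})" by auto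
  ultimately show ?thesis unfolding VV_def by (rule finite_subset)
qed

lemma msz_conv: "msz (conv la) = (\<Sum>s\<leftarrow>la. sum_list s)"
proof -
  let ?D = "SIGMA j:{1..length la}. {..<length (la ! (j - 1))}"
  have "msz (conv la) = (\<Sum>(j, r)\<in>?D. conv la j r)"
    by (rule msz_sum[OF VV_conv]) (auto simp: conv_def split: if_splits)
  also have "\<dots> = (\<Sum>j\<in>{1..length la}. \<Sum>r<length (la ! (j - 1)). conv la j r)"
    by (rule sum.Sigma[symmetric]) auto
  also have "\<dots> = (\<Sum>j\<in>{1..length la}. sum_list (la ! (j - 1)))"
    by (intro sum.cong refl) (auto simp: conv_def sum_list_sum_nth atLeast0LessThan)
  also have "\<dots> = (\<Sum>j<length la. sum_list (la ! j))"
    by (simp add: sum.atLeast1_atMost_eq)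
  also have "\<dots> = (\<Sum>s\<leftarrow>la. sum_list s)" by (simp add: sum_list_sum_nth atLeast0LessThan)
  finally show ?thesis .
qed

lemma sum_idx: "(\<Sum>s\<in>idx mu. case_prod (ent mu) s) = (\<Sum>s\<leftarrow>mu. sum_list s)"
proof -
  have "(\<Sum>s\<in>idx mu. case_prod (ent mu) s) = (\<Sum>p\<in>{1..length mu}. \<Sum>i\<in>{1..length (mu ! (p - 1))}. ent mu p i)"
    unfolding idx_Sigma by (subst sum.Sigma[symmetric]) auto
  also have "\<dots> = (\<Sum>p\<in>{1..length mu}. sum_list (mu ! (p - 1)))"
  proof (intro sum.cong refl)
    fix p
    show "(\<Sum>i\<in>{1..length (mu ! (p - 1))}. ent mu p i) = sum_list (mu ! (p - 1))"
      by (simp add: sum.atLeast1_atMost_eq ent_def sum_list_sum_nth atLeast0LessThan)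
  qed
  also have "\<dots> = (\<Sum>p<length mu. sum_list (mu ! p))"
    by (simp add: sum.atLeast1_atMost_eq)
  also have "\<dots> = (\<Sum>s\<leftarrow>mu. sum_list s)" by (simp add: sum_list_sum_nth atLeast0LessThan)
  finally show ?thesis .
qed

lemma ParMat_PMg: "ParMat nu mu = PMg (idx nu) (idx mu) (case_prod (ent nu)) (case_prod (ent mu))"
  unfolding ParMat_def PMg_def Parts_def
  by (simp add: Ball_def split_paired_All conj_assoc)

lemma length_le_sum_list: "\<forall>x\<in>set s. 0 < (x::nat) \<Longrightarrow> length s \<le> sum_list s"
  by (induction s) auto

lemma finite_Par: "finite (Par l m)"
proof -
  let ?B = "{xs. set xs \<subseteq> {..m} \<and> length xs \<le> m}"
  have fB: "finite ?B" by (rule finite_lists_length_le) simp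
  have "Par l m \<subseteq> {la. set la \<subseteq> ?B \<and> length la \<le> l}"
  proof
    fix la assume "la \<in> Par l m"
    then have la: "length la = l" "\<forall>s\<in>set la. \<forall>x\<in>set s. 0 < x" "(\<Sum>s\<leftarrow>la. sum_list s) = m"
      unfolding Par_def Lambda_st_def by auto
    have "set la \<subseteq> ?B"
    proof
      fix s assume s: "s \<in> set la"
      have "sum_list s \<le> (\<Sum>s\<leftarrow>la. sum_list s)" using s by (intro member_le_sum_list) auto
      then have sm: "sum_list s \<le> m" using la(3) by simp
      have "set s \<subseteq> {..m}" using sm member_le_sum_list[of _ s] by (auto intro: le_trans)
      moreover have "length s \<le> m" using length_le_sum_list[of s] la(2) s sm by auto
      ultimately show "s \<in> ?B" by simp
    qed
    then show "la \<in> {la. set la \<subseteq> ?B \<and> length la \<le> l}" using la(1) by simp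
  qed
  moreover have "finite {la. set la \<subseteq> ?B \<and> length la \<le> l}" using fB by (rule finite_lists_length_le)
  ultimately show ?thesis by (rule finite_subset)
qed

lemma conv_nonzero:
  assumes "\<forall>s\<in>set la. \<forall>x\<in>set s. 0 < x" "1 \<le> j" "j \<le> length la"
  shows "conv la j r \<noteq> 0 \<longleftrightarrow> r < length (la ! (j - 1))"
proof -
  have jl: "j - 1 < length la" using assms(2,3) by simp
  then have m: "la ! (j - 1) \<in> set la" by (rule nth_mem)
  show ?thesis
  proof
    assume "conv la j r \<noteq> 0" then show "r < length (la ! (j - 1))" unfolding conv_def by (auto split: if_splits)
  next
    assume r: "r < length (la ! (j - 1))"
    then have "la ! (j - 1) ! r \<in> set (la ! (j - 1))" by (rule nth_mem)
    then have "0 < la ! (j - 1) ! r" using assms(1) m by blast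
    then show "conv la j r \<noteq> 0" unfolding conv_def using assms(2,3) r by simp
  qed
qed

lemma conv_inj: "inj_on conv (Par l m)"
proof (rule inj_onI)
  fix la la' assume a: "la \<in> Par l m" "la' \<in> Par l m" "conv la = conv la'"
  have l: "length la = l" "length la' = l" and p: "\<forall>s\<in>set la. \<forall>x\<in>set s. 0 < x" "\<forall>s\<in>set la'. \<forall>x\<in>set s. 0 < x"
    using a(1,2) unfolding Par_def Lambda_st_def by auto
  show "la = la'"
  proof (rule nth_equalityI)
    show "length la = length la'" using l by simp
    fix k assume k: "k < length la"
    have j: "1 \<le> Suc k" "Suc k \<le> length la" "Suc k \<le> length la'" using k l by auto
    have len: "length (la ! k) = length (la' ! k)"
    proof -
      have "\<And>r. r < length (la ! k) \<longleftrightarrow> r < length (la' ! k)"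
        using conv_nonzero[OF p(1) j(1,2)] conv_nonzero[OF p(2) j(1,3)] a(3) by simp
      then show ?thesis by (meson linorder_neqE_nat less_irrefl)
    qed
    show "la ! k = la' ! k"
    proof (rule nth_equalityI)
      show "length (la ! k) = length (la' ! k)" by (rule len)
      fix r assume r: "r < length (la ! k)"
      have "conv la (Suc k) r = conv la' (Suc k) r" using a(3) by simp
      then show "la ! k ! r = la' ! k ! r" using r len j unfolding conv_def by simp
    qed
  qed
qed

lemma shape_conv:
  assumes "la \<in> Par l m"
  shows "shape (conv la)"
  unfolding shape_def
proof (intro conjI allI)
  fix r show "conv la 0 r = 0" unfolding conv_def by simp
next
  fix j r
  show "conv la j (Suc r) \<le> conv la j r"
  proof (cases "1 \<le> j \<and> j \<le> length la \<and> Suc r < length (la ! (j - 1))")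
    case True
    then have "j - 1 < length la" by linarith
    then have "la ! (j - 1) \<in> set la" by (rule nth_mem)
    then have "is_partition (la ! (j - 1))" using assms unfolding Par_def by auto
    then have "sorted_wrt (\<ge>) (la ! (j - 1))" unfolding is_partition_def by simp
    then have "la ! (j - 1) ! (Suc r) \<le> la ! (j - 1) ! r" using True
      by (auto simp: sorted_wrt_iff_nth_less)
    then show ?thesis using True unfolding conv_def by simp
  next
    case False then show ?thesis unfolding conv_def by auto
  qed
qed


lemma dc0:
  fixes A :: "nat set"
  assumes "finite A" "\<forall>r\<in>A. \<forall>r'. r' \<le> r \<longrightarrow> r' \<in> A"
  shows "A = {..<card A}"
proof (cases "A = {}")
  case True then show ?thesis by simp
next
  case False
  have mA: "Max A \<in> A" using assms(1) False by simp
  have e: "A = {..Max A}"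
  proof
    show "A \<subseteq> {..Max A}" using assms(1) by auto
    show "{..Max A} \<subseteq> A" using assms(2) mA by auto
  qed
  then have "card A = card {..Max A}" by simp
  then have "card A = Suc (Max A)" by simp
  then show ?thesis using e by (simp add: lessThan_Suc_atMost[symmetric])
qed

lemma shape_anti: "shape z \<Longrightarrow> r' \<le> r \<Longrightarrow> z j r \<le> z j r'"
proof (induction r)
  case 0 then show ?case by simp
next
  case (Suc r)
  show ?case
  proof (cases "r' = Suc r")
    case True then show ?thesis by simp
  next
    case False
    then have "r' \<le> r" using Suc.prems by simp
    then have "z j r \<le> z j r'" using Suc by simp
    moreover have "z j (Suc r) \<le> z j r" using Suc.prems(1) unfolding shape_def by simp
    ultimately show ?thesis by simp
  qed
qed

lemma card_CG_gT:
  assumes T: "T \<in> gT z S cnt" and V: "VV z" and fS: "finite S"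
  shows "msz z = (\<Sum>s\<in>S. cnt s)"
proof -
  have eq: "CG z = (\<Union>s\<in>S. {x \<in> CG z. prod.swap (T x) = s})" using T unfolding gT_def by auto
  have "card (CG z) = (\<Sum>s\<in>S. card {x \<in> CG z. prod.swap (T x) = s})"
    by (subst eq, rule card_UN_disjoint) (use fS finite_CG[OF V] in auto)
  also have "\<dots> = (\<Sum>s\<in>S. cnt s)" using T unfolding gT_def by simp
  finally show ?thesis unfolding msz_def .
qed

lemma char:
  assumes sh: "shape z" and V: "VV z" and T: "T \<in> gT z (idx mu) (case_prod (ent mu))"
    and mu: "mu \<in> Lambda_st l m"
  shows "\<exists>la\<in>Par l m. z = conv la"
proof -
  have lmu: "length mu = l" and smu: "(\<Sum>s\<leftarrow>mu. sum_list s) = m" using mu unfolding Lambda_st_def by auto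
  define n where "n j = card {r. z j r \<noteq> 0}" for j
  have fin: "finite {r. z j r \<noteq> 0}" for j
  proof -
    have "{r. z j r \<noteq> 0} \<subseteq> snd ` {(j', r). z j' r \<noteq> 0}"
    proof
      fix r assume "r \<in> {r. z j r \<noteq> 0}"
      then have "(j, r) \<in> {(j', r). z j' r \<noteq> 0}" by simp
      then show "r \<in> snd ` {(j', r). z j' r \<noteq> 0}" by (rule image_eqI[rotated]) simp
    qed
    moreover have "finite (snd ` {(j', r). z j' r \<noteq> 0})" using V unfolding VV_def by simp
    ultimately show ?thesis by (rule finite_subset)
  qed
  have nz: "z j r \<noteq> 0 \<longleftrightarrow> r < n j" for j r
  proof -
    have "{r. z j r \<noteq> 0} = {..<n j}" unfolding n_def
    proof (rule dc0[OF fin])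
      show "\<forall>r\<in>{r. z j r \<noteq> 0}. \<forall>r'. r' \<le> r \<longrightarrow> r' \<in> {r. z j r \<noteq> 0}"
        using shape_anti[OF sh] by (metis (mono_tags, lifting) le_zero_eq mem_Collect_eq)
    qed
    then show ?thesis by blast
  qed
  define la where "la = map (\<lambda>j. map (z j) [0..<n j]) [1..<Suc l]"
  have len: "length la = l" unfolding la_def by simp
  have lai: "la ! (j - 1) = map (z j) [0..<n j]" if "1 \<le> j" "j \<le> l" for j
  proof -
    have "[1..<Suc l] ! (j - 1) = j" using that by (subst nth_upt) auto
    then show ?thesis using that unfolding la_def by (simp del: upt_Suc add: nth_map)
  qed
  have big: "z j r = 0" if "l < j" for j r
  proof (rule ccontr)
    assume ne: "z j r \<noteq> 0"
    then have cell: "(j, Suc r, 1) \<in> CG z" unfolding CG_iff by simp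
    have "prod.swap (T (j, Suc r, 1)) \<in> idx mu" using T cell unfolding gT_def by auto
    then have "fst (prod.swap (T (j, Suc r, 1))) \<le> l" using lmu unfolding idx_def by auto
    moreover have "j \<le> snd (T (j, Suc r, 1))" using T cell unfolding gT_def ssG_def by blast
    ultimately show False using that by (simp add: prod.swap_def)
  qed
  have cz: "conv la = z"
  proof (intro ext)
    fix j r
    show "conv la j r = z j r"
    proof (cases "1 \<le> j \<and> j \<le> l")
      case True
      then show ?thesis unfolding conv_def len using lai[of j] nz[of j r] by auto
    next
      case False
      show ?thesis
      proof (cases "j = 0")
        case True then show ?thesis using sh unfolding conv_def shape_def by simp
      next
        case j0: False
        then have "l < j" using False by simp
        then show ?thesis using big unfolding conv_def len by simp
      qed
    qed
  qed
  have pos: "\<forall>s\<in>set la. \<forall>x\<in>set s. 0 < x"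
    unfolding la_def using nz by auto
  have part: "\<forall>s\<in>set la. is_partition s"
  proof
    fix s assume "s \<in> set la"
    then obtain j where s: "s = map (z j) [0..<n j]" unfolding la_def by auto
    have "sorted_wrt (\<ge>) s" unfolding s sorted_wrt_iff_nth_less using shape_anti[OF sh] by simp
    moreover have "\<forall>x\<in>set s. 0 < x" using s nz by auto
    ultimately show "is_partition s" unfolding is_partition_def by simp
  qed
  have "(\<Sum>s\<leftarrow>la. sum_list s) = msz z" using msz_conv[of la] cz by simp
  also have "\<dots> = (\<Sum>s\<in>idx mu. case_prod (ent mu) s)" by (rule card_CG_gT[OF T V finite_idx])
  also have "\<dots> = m" using sum_idx smu by simp
  finally have sm: "(\<Sum>s\<leftarrow>la. sum_list s) = m" .
  have "la \<in> Par l m" unfolding Par_def Lambda_st_def using len pos part sm by simp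
  then show ?thesis using cz by auto
qed


lemma reach_shape:
  "paths x (ups lv cs X) z \<noteq> 0 \<Longrightarrow> shape x \<Longrightarrow> VV x \<Longrightarrow> shape z \<and> VV z"
proof (induction X arbitrary: x)
  case Nil then show ?case by (simp add: ups_def split: if_splits)
next
  case (Cons c X)
  have "(\<Sum>y\<in>{y. UpR (lv c) (cs c) x y}. paths y (ups lv cs X) z) \<noteq> 0"
    using Cons.prems(1) by (simp add: ups_def)
  then have "\<exists>y\<in>{y. UpR (lv c) (cs c) x y}. paths y (ups lv cs X) z \<noteq> 0"
  proof (rule contrapos_np)
    assume "\<not> (\<exists>y\<in>{y. UpR (lv c) (cs c) x y}. paths y (ups lv cs X) z \<noteq> 0)"
    then show "(\<Sum>y\<in>{y. UpR (lv c) (cs c) x y}. paths y (ups lv cs X) z) = 0" by (intro sum.neutral) blast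
  qed
  then obtain y where y0: "y \<in> {y. UpR (lv c) (cs c) x y}" "paths y (ups lv cs X) z \<noteq> 0" by blast
  then have y: "UpR (lv c) (cs c) x y" "paths y (ups lv cs X) z \<noteq> 0" by auto
  have "shape y" using shape_succ[OF y(1) Cons.prems(2)] .
  moreover have "VV y" using UpR_VV[OF y(1)] by simp
  ultimately show ?case using Cons.IH y(2) by blast
qed

lemma shape_E0: "shape E0" unfolding shape_def E0_def by simp

lemma CG_inj: "CG g = CG g' \<Longrightarrow> g = g'"
proof (intro ext)
  fix j r assume e: "CG g = CG g'"
  show "g j r = g' j r"
  proof (rule ccontr)
    assume ne: "g j r \<noteq> g' j r"
    show False
    proof (cases "g j r < g' j r")
      case True
      then have "(j, Suc r, g' j r) \<in> CG g'" "(j, Suc r, g' j r) \<notin> CG g" unfolding CG_iff by auto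
      then show False using e by simp
    next
      case False
      then have "g' j r < g j r" using ne by simp
      then have "(j, Suc r, g j r) \<in> CG g" "(j, Suc r, g j r) \<notin> CG g'" unfolding CG_iff by auto
      then show False using e by simp
    qed
  qed
qed

lemma CG_from_T:
  assumes "T \<in> gT g S cnt" "\<forall>t\<in>S. 1 \<le> fst t"
  shows "CG g = {x. T x \<noteq> (0, 0)}"
proof (intro set_eqI iffI)
  fix x assume x: "x \<in> CG g"
  then have "prod.swap (T x) \<in> S" using assms(1) unfolding gT_def by auto
  then have "1 \<le> fst (prod.swap (T x))" using assms(2) by blast
  then show "x \<in> {x. T x \<noteq> (0, 0)}" by (auto simp: prod.swap_def)
next
  fix x assume "x \<in> {x. T x \<noteq> (0, 0)}"
  moreover have "\<forall>x. x \<notin> CG g \<longrightarrow> T x = (0, 0)" using assms(1) unfolding gT_def by blast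
  ultimately show "x \<in> CG g" by blast
qed

theorem main:
  fixes l m :: nat and nu mu :: "nat list list"
  assumes "1 \<le> l" and nu: "nu \<in> Lambda_st l m" and mu: "mu \<in> Lambda_st l m"
  shows "\<exists>\<phi>. bij_betw \<phi> (ParMat nu mu) (SST2 l m nu mu)"
proof -
  let ?cm = "case_prod (ent mu)" and ?cn = "case_prod (ent nu)"
  let ?Sm = "idx mu" and ?Sn = "idx nu"
  let ?X = "sorted_list_of_set ?Sm" and ?rl = "rev (sorted_list_of_set ?Sn)"
  let ?ups = "upsS ?Sm ?cm" and ?dns = "dnsS ?Sn ?cn"
  let ?F = "\<lambda>z. card (gT z ?Sn ?cn) * card (gT z ?Sm ?cm)"
  have sX: "set ?X = ?Sm" using finite_idx by simp
  have srl: "set ?rl = ?Sn" using finite_idx by simp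
  have PM: "finite (ParMat nu mu) \<and> card (ParMat nu mu) = Mc fst ?X ?cm (map (\<lambda>r. (fst r, ?cn r)) ?rl)"
    using PM_Mc[of ?rl ?X ?cn ?cm] idx_lev sX srl unfolding ParMat_PMg by simp
  have "Mc fst ?X ?cm (map (\<lambda>r. (fst r, ?cn r)) ?rl) = paths E0 (?ups @ ?dns) E0"
    using paths_Mc[of ?X fst ?cm "map (\<lambda>r. (fst r, ?cn r)) ?rl"] unfolding upsS_def dnsS_def by simp
  also have "\<dots> = (\<Sum>z\<in>{z. paths E0 ?ups z \<noteq> 0}. paths E0 ?ups z * paths z ?dns E0)"
    by (rule paths_append[OF finite_reach]) simp
  also have "\<dots> = (\<Sum>z\<in>{z. paths E0 ?ups z \<noteq> 0}. ?F z)"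
  proof (rule sum.cong[OF refl])
    fix z assume "z \<in> {z. paths E0 ?ups z \<noteq> 0}"
    then have "shape z \<and> VV z" using reach_shape[of E0 fst ?cm ?X z] shape_E0 VV_E0 unfolding upsS_def by simp
    then show "paths E0 ?ups z * paths z ?dns E0 = ?F z"
      using Kup[of z ?Sm ?cm] Kdn[of z ?Sn ?cn] finite_idx idx_lev by simp
  qed
  finally have cPM: "card (ParMat nu mu) = (\<Sum>z\<in>{z. paths E0 ?ups z \<noteq> 0}. ?F z)" using PM by simp
  have fSST: "\<And>la. finite (SST la nu)" "\<And>la. finite (SST la mu)"
    unfolding SST_gT using finite_gT[OF VV_conv finite_idx] by auto
  have disj: "\<forall>la\<in>Par l m. \<forall>la'\<in>Par l m. la \<noteq> la' \<longrightarrow> (SST la nu \<times> SST la mu) \<inter> (SST la' nu \<times> SST la' mu) = {}"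
  proof (intro ballI impI)
    fix la la' assume la: "la \<in> Par l m" "la' \<in> Par l m" "la \<noteq> la'"
    show "(SST la nu \<times> SST la mu) \<inter> (SST la' nu \<times> SST la' mu) = {}"
    proof (rule ccontr)
      assume "(SST la nu \<times> SST la mu) \<inter> (SST la' nu \<times> SST la' mu) \<noteq> {}"
      then obtain T1 where t: "T1 \<in> SST la nu" "T1 \<in> SST la' nu" by auto
      have "CG (conv la) = {x. T1 x \<noteq> (0, 0)}" using CG_from_T[OF t(1)[unfolded SST_gT] idx_lev] .
      moreover have "CG (conv la') = {x. T1 x \<noteq> (0, 0)}" using CG_from_T[OF t(2)[unfolded SST_gT] idx_lev] .
      ultimately have "CG (conv la) = CG (conv la')" by simp
      then have "conv la = conv la'" by (rule CG_inj)
      then have "la = la'" using conv_inj[of l m] la(1,2) unfolding inj_on_def by blast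
      then show False using la(3) by simp
    qed
  qed
  have fSST2: "finite (SST2 l m nu mu)"
    unfolding SST2_def using finite_Par fSST by blast
  have "card (SST2 l m nu mu) = (\<Sum>la\<in>Par l m. card (SST la nu \<times> SST la mu))"
    unfolding SST2_def by (rule card_UN_disjoint[OF finite_Par _ disj]) (use fSST in blast)
  also have "\<dots> = (\<Sum>la\<in>Par l m. ?F (conv la))"
    by (simp add: card_cartesian_product SST_gT)
  also have "\<dots> = (\<Sum>z\<in>conv ` Par l m. ?F z)"
    using sum.reindex[OF conv_inj[of l m], of ?F] by (simp add: o_def)
  also have "\<dots> = (\<Sum>z\<in>conv ` Par l m \<inter> {z. paths E0 ?ups z \<noteq> 0}. ?F z)"
  proof (rule sum.mono_neutral_right)
    show "finite (conv ` Par l m)" using finite_Par by simp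
    show "conv ` Par l m \<inter> {z. paths E0 ?ups z \<noteq> 0} \<subseteq> conv ` Par l m" by blast
    show "\<forall>z\<in>conv ` Par l m - conv ` Par l m \<inter> {z. paths E0 ?ups z \<noteq> 0}. ?F z = 0"
    proof
      fix z assume z: "z \<in> conv ` Par l m - conv ` Par l m \<inter> {z. paths E0 ?ups z \<noteq> 0}"
      then obtain la where la: "la \<in> Par l m" "z = conv la" by blast
      have "card (gT z ?Sm ?cm) = paths E0 ?ups z"
        using Kup[of z ?Sm ?cm] shape_conv[OF la(1)] VV_conv finite_idx idx_lev la(2) by simp
      then show "?F z = 0" using z by simp
    qed
  qed
  also have "\<dots> = (\<Sum>z\<in>{z. paths E0 ?ups z \<noteq> 0}. ?F z)"
  proof (rule sum.mono_neutral_left)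
    show "finite {z. paths E0 ?ups z \<noteq> 0}" by (rule finite_reach)
    show "conv ` Par l m \<inter> {z. paths E0 ?ups z \<noteq> 0} \<subseteq> {z. paths E0 ?ups z \<noteq> 0}" by blast
    show "\<forall>z\<in>{z. paths E0 ?ups z \<noteq> 0} - conv ` Par l m \<inter> {z. paths E0 ?ups z \<noteq> 0}. ?F z = 0"
    proof
      fix z assume z: "z \<in> {z. paths E0 ?ups z \<noteq> 0} - conv ` Par l m \<inter> {z. paths E0 ?ups z \<noteq> 0}"
      then have sz: "shape z \<and> VV z" using reach_shape[of E0 fst ?cm ?X z] shape_E0 VV_E0 unfolding upsS_def by simp
      show "?F z = 0"
      proof (rule ccontr)
        assume "?F z \<noteq> 0"
        then have "card (gT z ?Sm ?cm) \<noteq> 0" by simp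
        then have "gT z ?Sm ?cm \<noteq> {}" by (intro notI) simp
        then obtain T where T: "T \<in> gT z ?Sm ?cm" by blast
        obtain la where "la \<in> Par l m" "z = conv la" using char[OF _ _ T mu] sz by blast
        then show False using z by blast
      qed
    qed
  qed
  finally have cSST: "card (SST2 l m nu mu) = (\<Sum>z\<in>{z. paths E0 ?ups z \<noteq> 0}. ?F z)" .
  show ?thesis
    using finite_same_card_bij[of "ParMat nu mu" "SST2 l m nu mu"] PM fSST2 cPM cSST by simp
qed


theorem theorem5p6:
  fixes l m :: nat and nu mu :: "nat list list"
  assumes "1 \<le> l" and "nu \<in> Lambda_st l m" and "mu \<in> Lambda_st l m"
  shows "\<exists>\<phi>. bij_betw \<phi> (ParMat nu mu) (SST2 l m nu mu)"
  using main[OF assms] .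

end
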